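(* Let $X=\{0,1\}$ and $k\ge2$. The classes $\mathcal A_k$ and $\mathcal R_k$ of aperiodic and of regular $k$-partitions of $X^\omega$ are each closed under the unary operations $q_0,\ldots,q_{k-1}$ and the binary operation $\cdot$.
   Context: $\mathcal R_k$ ($\mathcal A_k$): functions $X^\omega\to\bar k=\{0,\dots,k-1\}$ all of whose preimages are regular (aperiodic) $\omega$-languages (recognised by deterministic Muller acceptors, resp. with aperiodic automaton). Let $\tilde0=110000$, $\tilde1=110100$, $\tilde2=110010$ and $f:\{0,1,2\}^\omega\to\{0,1\}^\omega$, $f(x_0x_1\cdots)=\tilde x_0\tilde x_1\cdots$. For $A:X^\omega\to\bar k$ and $i<k$, $q_i(A)(\xi)=i$ if $\xi\notin f(\{0,1,2\}^\omega)$ or $\xi[n,n+6)=\tilde 2$ for infinitely many $n$; $q_i(A)(\xi)=A(\eta)$ if $\xi=f(\eta)$ with $\eta\in\{0,1\}^\omega$; $q_i(A)(\xi)=A(\eta)$ if $\xi=f(\sigma2\eta)$ with $\sigma\in\{0,1,2\}^*$ and $\eta\in\{0,1\}^\omega$. Let $g:X^\omega\to X^\omega$, $g(x_0x_1\cdots)=\tilde x_0\tilde2\tilde x_1\tilde2\cdots$ (and similarly on finite words). For $A,B:X^\omega\to\bar k$: $(A\cdot B)(\xi)=A(\eta)$ if $\xi=g(\eta)$; and $(A\cdot B)(\xi)=B(\eta)$ if $\xi=g(u)\,v\,\eta$ with $u\in X^*$, $\eta\in X^\omega$, and $v\in X^+$ the shortest word with $g(u)vX^\omega\cap g(X^\omega)=\emptyset$.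 *)

theory Defs
  imports Main "HOL-Library.Omega_Words_Fun"
begin

text \<open>Binary alphabet X = {0,1} is represented by type bool (1 = True, 0 = False).
  omega-words are 'a word = nat => 'a (HOL-Library.Omega_Words_Fun).\<close>

definition run :: "(nat \<Rightarrow> 'a \<Rightarrow> nat) \<Rightarrow> nat \<Rightarrow> 'a word \<Rightarrow> nat \<Rightarrow> nat" where
  "run \<delta> q0 \<xi> n = foldl \<delta> q0 (map \<xi> [0..<n])"

definition muller_recognises ::
  "nat set \<Rightarrow> nat \<Rightarrow> (nat \<Rightarrow> 'a \<Rightarrow> nat) \<Rightarrow> nat set set \<Rightarrow> 'a word set \<Rightarrow> bool" where
  "muller_recognises Q q0 \<delta> F L \<longleftrightarrow>
     finite Q \<and> q0 \<in> Q \<and> (\<forall>q\<in>Q. \<forall>a. \<delta> q a \<in> Q) \<and>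
     (\<forall>\<xi>. \<xi> \<in> L \<longleftrightarrow> {q. \<exists>\<^sub>\<infinity>n. run \<delta> q0 \<xi> n = q} \<in> F)"

definition aperiodic_trans :: "nat set \<Rightarrow> (nat \<Rightarrow> 'a \<Rightarrow> nat) \<Rightarrow> bool" where
  "aperiodic_trans Q \<delta> \<longleftrightarrow>
     (\<exists>m. \<forall>q\<in>Q. \<forall>w :: 'a list.
        foldl \<delta> q (concat (replicate m w)) = foldl \<delta> q (concat (replicate (Suc m) w)))"

definition regular_omega :: "'a word set \<Rightarrow> bool" where
  "regular_omega L \<longleftrightarrow> (\<exists>Q q0 \<delta> F. muller_recognises Q q0 \<delta> F L)"

definition aperiodic_omega :: "'a word set \<Rightarrow> bool" where
  "aperiodic_omega L \<longleftrightarrow>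
     (\<exists>Q q0 \<delta> F. muller_recognises Q q0 \<delta> F L \<and> aperiodic_trans Q \<delta>)"

definition Rk :: "nat \<Rightarrow> (bool word \<Rightarrow> nat) set" where
  "Rk k = {A. (\<forall>\<xi>. A \<xi> < k) \<and> (\<forall>i<k. regular_omega (A -` {i}))}"

definition Ak :: "nat \<Rightarrow> (bool word \<Rightarrow> nat) set" where
  "Ak k = {A. (\<forall>\<xi>. A \<xi> < k) \<and> (\<forall>i<k. aperiodic_omega (A -` {i}))}"

definition bit :: "bool \<Rightarrow> nat" where "bit b = (if b then 1 else 0)"

definition tl6 :: "nat \<Rightarrow> bool list" where
  "tl6 x = (if x = 0 then [True, True, False, False, False, False]
            else if x = 1 then [True, True, False, True, False, False]
            else [True, True, False, False, True, False])"

text \<open>f : {0,1,2}^omega -> {0,1}^omega (only applied to words with letters <= 2)\<close>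
definition fenc :: "nat word \<Rightarrow> bool word" where
  "fenc \<eta> n = tl6 (\<eta> (n div 6)) ! (n mod 6)"

definition ternary :: "nat word \<Rightarrow> bool" where
  "ternary \<eta> \<longleftrightarrow> (\<forall>j. \<eta> j \<le> 2)"

definition binary :: "nat word \<Rightarrow> bool" where
  "binary \<eta> \<longleftrightarrow> (\<forall>j. \<eta> j \<le> 1)"

text \<open>Words in {0,1}^omega (as nat words) correspond to bool words via bit.\<close>
definition qop :: "nat \<Rightarrow> (bool word \<Rightarrow> nat) \<Rightarrow> bool word \<Rightarrow> nat" where
  "qop i A \<xi> =
    (if \<xi> \<notin> fenc ` {\<eta>. ternary \<eta>} \<or> (\<exists>\<^sub>\<infinity>n. \<xi> [n \<rightarrow> n + 6] = tl6 2) then i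
     else if (\<exists>\<eta>. \<xi> = fenc (bit \<circ> \<eta>)) then A (THE \<eta>. \<xi> = fenc (bit \<circ> \<eta>))
     else A (THE \<eta>. \<exists>\<sigma>. set \<sigma> \<subseteq> {0,1,2} \<and> \<xi> = fenc ((\<sigma> @ [2]) \<frown> (bit \<circ> \<eta>))))"

text \<open>g(x0 x1 ...) = tilde x0 tilde 2 tilde x1 tilde 2 ..., on infinite and finite words\<close>
definition genc :: "bool word \<Rightarrow> bool word" where
  "genc \<eta> n = tl6 (if n mod 12 < 6 then bit (\<eta> (n div 12)) else 2) ! (n mod 6)"

definition genc_list :: "bool list \<Rightarrow> bool list" where
  "genc_list u = concat (map (\<lambda>x. tl6 (bit x) @ tl6 2) u)"

definition nonext :: "bool list \<Rightarrow> bool" where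
  "nonext p \<longleftrightarrow> (\<forall>\<eta>. genc \<eta> [0 \<rightarrow> length p] \<noteq> p)"

definition dot :: "(bool word \<Rightarrow> nat) \<Rightarrow> (bool word \<Rightarrow> nat) \<Rightarrow> bool word \<Rightarrow> nat" where
  "dot A B \<xi> =
    (if \<exists>\<eta>. \<xi> = genc \<eta> then A (THE \<eta>. \<xi> = genc \<eta>)
     else B (THE \<eta>. \<exists>u v. \<xi> = (genc_list u @ v) \<frown> \<eta> \<and> v \<noteq> [] \<and>
                nonext (genc_list u @ v) \<and>
                (\<forall>j. 0 < j \<and> j < length v \<longrightarrow> \<not> nonext (genc_list u @ take j v))))"

end

theory Submission
  imports Defs "HOL-Library.Nat_Bijection"
begin

definition infs :: "(nat \<Rightarrow> nat) \<Rightarrow> nat set" where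
  "infs r = {q. \<exists>\<^sub>\<infinity>n. r n = q}"

lemma run_0[simp]: "run \<delta> q0 \<xi> 0 = q0" by (simp add: run_def)
lemma run_Suc[simp]: "run \<delta> q0 \<xi> (Suc n) = \<delta> (run \<delta> q0 \<xi> n) (\<xi> n)" by (simp add: run_def)
lemma run_add: "run \<delta> q0 \<xi> (n + m) = foldl \<delta> (run \<delta> q0 \<xi> n) (map \<xi> [n..<n+m])"
  by (induction m) auto

lemma infs_image:
  assumes "finite (range r)"
  shows "infs (\<lambda>n. f (r n)) = f ` infs r"
proof
  show "f ` infs r \<subseteq> infs (\<lambda>n. f (r n))"
    by (auto simp: infs_def elim: INFM_mono)
next
  show "infs (\<lambda>n. f (r n)) \<subseteq> f ` infs r"
  proof
    fix y assume "y \<in> infs (\<lambda>n. f (r n))"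
    hence inf: "infinite {n. f (r n) = y}" by (simp add: infs_def INFM_iff_infinite)
    have "finite (r ` {n. f (r n) = y})" using assms by (rule finite_subset[rotated]) auto
    from pigeonhole_infinite[OF inf this] obtain a0 where
      a0: "a0 \<in> {n. f (r n) = y}" and i: "infinite {a \<in> {n. f (r n) = y}. r a = r a0}" by blast
    have "infinite {n. r n = r a0}" using i by (rule infinite_super[rotated]) auto
    hence "r a0 \<in> infs r" by (simp add: infs_def INFM_iff_infinite)
    thus "y \<in> f ` infs r" using a0 by force
  qed
qed

lemma discrete_ivt:
  fixes g :: "nat \<Rightarrow> nat"
  assumes mono: "\<And>n. g n \<le> g (Suc n)" and step: "\<And>n. g (Suc n) \<le> Suc (g n)"
    and "g a \<le> m" and "m \<le> g b"
  shows "\<exists>n\<ge>a. g n = m"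
proof -
  define P where "P n \<longleftrightarrow> a \<le> n \<and> m \<le> g n" for n
  have ex: "P (max a b)" unfolding P_def
    using assms(4) lift_Suc_mono_le[of g, OF mono] by (meson max.cobounded1 max.cobounded2 order_trans)
  define n where "n = (LEAST n. P n)"
  have Pn: "P n" unfolding n_def using ex by (rule LeastI)
  show ?thesis
  proof (cases "n = a")
    case True thus ?thesis using Pn assms(3) unfolding P_def by auto
  next
    case False
    with Pn obtain n' where n': "n = Suc n'" "a \<le> n'" unfolding P_def
      by (metis le_SucE not0_implies_Suc le_0_eq le_Suc_eq)
    have "\<not> P n'" using n' unfolding n_def using not_less_Least by (metis lessI n_def)
    hence "g n' < m" using n' unfolding P_def by auto
    hence "g n \<le> m" using step[of n'] n' by auto
    thus ?thesis using Pn n' unfolding P_def by (intro exI[of _ n]) auto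
  qed
qed

lemma infs_stretch:
  fixes g :: "nat \<Rightarrow> nat"
  assumes eq: "\<And>n. N \<le> n \<Longrightarrow> x n = y (g n)"
    and mono: "\<And>n. g n \<le> g (Suc n)" and step: "\<And>n. g (Suc n) \<le> Suc (g n)"
    and unb: "\<And>m. \<exists>n. m \<le> g n"
  shows "infs x = infs y"
proof (intro set_eqI iffI)
  fix q assume "q \<in> infs x"
  hence H: "\<forall>M. \<exists>n\<ge>M. x n = q" by (simp add: infs_def INFM_nat_le)
  have "\<forall>M'. \<exists>m\<ge>M'. y m = q"
  proof
    fix M'
    obtain n0 where n0: "M' \<le> g n0" using unb by blast
    obtain n where n: "n \<ge> max N n0" "x n = q" using H by blast
    have "g n0 \<le> g n" using lift_Suc_mono_le[of g, OF mono] n by auto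
    thus "\<exists>m\<ge>M'. y m = q" using n n0 eq[of n] by (intro exI[of _ "g n"]) auto
  qed
  thus "q \<in> infs y" by (simp add: infs_def INFM_nat_le)
next
  fix q assume "q \<in> infs y"
  hence H: "\<forall>M. \<exists>m\<ge>M. y m = q" by (simp add: infs_def INFM_nat_le)
  have "\<forall>M. \<exists>n\<ge>M. x n = q"
  proof
    fix M
    obtain m where m: "m \<ge> g (max M N)" "y m = q" using H by blast
    obtain b where "m \<le> g b" using unb by blast
    from discrete_ivt[of g, OF mono step m(1) this] obtain n where "n \<ge> max M N" "g n = m" by blast
    thus "\<exists>n\<ge>M. x n = q" using eq[of n] m by (intro exI[of _ n]) auto
  qed
  thus "q \<in> infs x" by (simp add: infs_def INFM_nat_le)
qed

definition aut :: "nat set \<Rightarrow> nat \<Rightarrow> (nat \<Rightarrow> 'a \<Rightarrow> nat) \<Rightarrow> bool" where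
  "aut Q q0 \<delta> \<longleftrightarrow> finite Q \<and> q0 \<in> Q \<and> (\<forall>q\<in>Q. \<forall>a. \<delta> q a \<in> Q)"

lemma foldl_in: "(\<forall>q\<in>Q. \<forall>a. \<delta> q a \<in> Q) \<Longrightarrow> q \<in> Q \<Longrightarrow> foldl \<delta> q w \<in> Q"
  by (induction w arbitrary: q) auto

lemma run_in: "aut Q q0 \<delta> \<Longrightarrow> run \<delta> q0 \<xi> n \<in> Q"
  unfolding aut_def run_def by (auto intro: foldl_in)

lemma run_finite_range: "aut Q q0 \<delta> \<Longrightarrow> finite (range (run \<delta> q0 \<xi>))"
  using run_in by (metis aut_def finite_subset image_subset_iff)

lemma muller_recognisesI:
  "aut Q q0 \<delta> \<Longrightarrow> (\<And>\<xi>. \<xi> \<in> L \<longleftrightarrow> infs (run \<delta> q0 \<xi>) \<in> F) \<Longrightarrow> muller_recognises Q q0 \<delta> F L"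
  unfolding muller_recognises_def aut_def infs_def by auto

lemma muller_recognisesD:
  "muller_recognises Q q0 \<delta> F L \<Longrightarrow> aut Q q0 \<delta> \<and> (\<forall>\<xi>. \<xi> \<in> L \<longleftrightarrow> infs (run \<delta> q0 \<xi>) \<in> F)"
  unfolding muller_recognises_def aut_def infs_def by auto

section \<open>Cascades\<close>

definition p1 :: "nat \<Rightarrow> nat" where "p1 c = fst (prod_decode c)"
definition p2 :: "nat \<Rightarrow> nat" where "p2 c = snd (prod_decode c)"
lemma p1_pe[simp]: "p1 (prod_encode (a,b)) = a" by (simp add: p1_def)
lemma p2_pe[simp]: "p2 (prod_encode (a,b)) = b" by (simp add: p2_def)

definition cdelta :: "(nat \<Rightarrow> 'a \<Rightarrow> nat) \<Rightarrow> (nat \<Rightarrow> 'a \<Rightarrow> nat \<Rightarrow> nat) \<Rightarrow> nat \<Rightarrow> 'a \<Rightarrow> nat" where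
  "cdelta \<delta>D \<tau> c a = prod_encode (\<delta>D (p1 c) a, \<tau> (p1 c) a (p2 c))"

fun crun :: "(nat \<Rightarrow> 'a \<Rightarrow> nat) \<Rightarrow> nat \<Rightarrow> (nat \<Rightarrow> 'a \<Rightarrow> nat \<Rightarrow> nat) \<Rightarrow> nat \<Rightarrow> 'a word \<Rightarrow> nat \<Rightarrow> nat" where
  "crun \<delta>D d0 \<tau> b0 \<xi> 0 = b0"
| "crun \<delta>D d0 \<tau> b0 \<xi> (Suc n) = \<tau> (run \<delta>D d0 \<xi> n) (\<xi> n) (crun \<delta>D d0 \<tau> b0 \<xi> n)"

lemma run_cascade:
  "run (cdelta \<delta>D \<tau>) (prod_encode (d0, b0)) \<xi> n = prod_encode (run \<delta>D d0 \<xi> n, crun \<delta>D d0 \<tau> b0 \<xi> n)"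
  by (induction n) (auto simp: cdelta_def)

lemma cascade_aut:
  assumes "aut QD d0 \<delta>D" "finite QB" "b0 \<in> QB" "\<And>d a q. d \<in> QD \<Longrightarrow> q \<in> QB \<Longrightarrow> \<tau> d a q \<in> QB"
  shows "aut (prod_encode ` (QD \<times> QB)) (prod_encode (d0, b0)) (cdelta \<delta>D \<tau>)"
  using assms unfolding aut_def cdelta_def by auto

lemma cascade_muller:
  assumes "aut QD d0 \<delta>D" "finite QB" "b0 \<in> QB" "\<And>d a q. d \<in> QD \<Longrightarrow> q \<in> QB \<Longrightarrow> \<tau> d a q \<in> QB"
  shows "muller_recognises (prod_encode ` (QD \<times> QB)) (prod_encode (d0, b0)) (cdelta \<delta>D \<tau>)
           {S. \<Phi> (p1 ` S) (p2 ` S)}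
           {\<xi>. \<Phi> (infs (run \<delta>D d0 \<xi>)) (infs (crun \<delta>D d0 \<tau> b0 \<xi>))}"
proof (rule muller_recognisesI)
  show A: "aut (prod_encode ` (QD \<times> QB)) (prod_encode (d0, b0)) (cdelta \<delta>D \<tau>)"
    using assms by (rule cascade_aut)
  fix \<xi>
  let ?r = "run (cdelta \<delta>D \<tau>) (prod_encode (d0, b0)) \<xi>"
  have fr: "finite (range ?r)" using A by (rule run_finite_range)
  have "infs (run \<delta>D d0 \<xi>) = infs (\<lambda>n. p1 (?r n))" by (simp add: run_cascade)
  also have "\<dots> = p1 ` infs ?r" using fr by (rule infs_image)
  finally have 1: "infs (run \<delta>D d0 \<xi>) = p1 ` infs ?r" .
  have "infs (crun \<delta>D d0 \<tau> b0 \<xi>) = infs (\<lambda>n. p2 (?r n))" by (simp add: run_cascade)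
  also have "\<dots> = p2 ` infs ?r" using fr by (rule infs_image)
  finally have 2: "infs (crun \<delta>D d0 \<tau> b0 \<xi>) = p2 ` infs ?r" .
  show "\<xi> \<in> {\<xi>. \<Phi> (infs (run \<delta>D d0 \<xi>)) (infs (crun \<delta>D d0 \<tau> b0 \<xi>))} \<longleftrightarrow> infs ?r \<in> {S. \<Phi> (p1 ` S) (p2 ` S)}"
    using 1 2 by simp
qed

section \<open>Aperiodicity\<close>

lemma concat_rep_add: "concat (replicate (a + b) w) = concat (replicate a w) @ concat (replicate b w)"
  by (simp add: replicate_add)

lemma aperiodic_stable:
  assumes cl: "\<forall>q\<in>Q. \<forall>a. \<delta> q a \<in> Q" and q: "q \<in> Q"
    and m: "\<forall>q\<in>Q. \<forall>w. foldl \<delta> q (concat (replicate m w)) = foldl \<delta> q (concat (replicate (Suc m) w))"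
  shows "k \<ge> m \<Longrightarrow> foldl \<delta> q (concat (replicate k w)) = foldl \<delta> q (concat (replicate m w))"
proof (induction k rule: dec_induct)
  case base thus ?case by simp
next
  case (step k)
  have "foldl \<delta> q (concat (replicate (Suc k) w)) = foldl \<delta> q (concat (replicate (Suc m + (k - m)) w))"
    using step by simp
  also have "\<dots> = foldl \<delta> (foldl \<delta> q (concat (replicate (Suc m) w))) (concat (replicate (k - m) w))"
    by (simp only: concat_rep_add foldl_append)
  also have "\<dots> = foldl \<delta> (foldl \<delta> q (concat (replicate m w))) (concat (replicate (k - m) w))"
    using m q by simp
  also have "\<dots> = foldl \<delta> q (concat (replicate (m + (k - m)) w))"
    by (simp only: concat_rep_add foldl_append)
  also have "\<dots> = foldl \<delta> q (concat (replicate m w))" using step step.IH by simp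
  finally show ?case .
qed

fun tact :: "(nat \<Rightarrow> 'a \<Rightarrow> nat) \<Rightarrow> (nat \<Rightarrow> 'a \<Rightarrow> nat \<Rightarrow> nat) \<Rightarrow> nat \<Rightarrow> 'a list \<Rightarrow> nat \<Rightarrow> nat" where
  "tact \<delta>D \<tau> d [] q = q"
| "tact \<delta>D \<tau> d (a # w) q = tact \<delta>D \<tau> (\<delta>D d a) w (\<tau> d a q)"

lemma foldl_cdelta:
  "foldl (cdelta \<delta>D \<tau>) (prod_encode (d, q)) w = prod_encode (foldl \<delta>D d w, tact \<delta>D \<tau> d w q)"
  by (induction w arbitrary: d q) (auto simp: cdelta_def)

lemma tact_append: "tact \<delta>D \<tau> d (w @ v) q = tact \<delta>D \<tau> (foldl \<delta>D d w) v (tact \<delta>D \<tau> d w q)"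
  by (induction w arbitrary: d q) auto

definition good :: "nat set \<Rightarrow> (nat \<Rightarrow> 'b \<Rightarrow> nat) \<Rightarrow> (nat \<Rightarrow> nat) \<Rightarrow> bool" where
  "good QB \<delta>B f \<longleftrightarrow> (\<exists>ws. \<forall>q\<in>QB. f q = foldl \<delta>B q ws) \<or> (\<exists>c\<in>QB. \<forall>q\<in>QB. f q = c)"

lemma good_in: "good QB \<delta>B f \<Longrightarrow> \<forall>q\<in>QB. \<forall>a. \<delta>B q a \<in> QB \<Longrightarrow> q \<in> QB \<Longrightarrow> f q \<in> QB"
  unfolding good_def using foldl_in by metis

lemma good_id: "good QB \<delta>B (\<lambda>q. q)"
  unfolding good_def by (intro disjI1 exI[of _ "[]"]) auto

lemma good_letter: "good QB \<delta>B (\<lambda>q. \<delta>B q b)"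
  unfolding good_def by (intro disjI1 exI[of _ "[b]"]) auto

lemma good_const: "c \<in> QB \<Longrightarrow> good QB \<delta>B (\<lambda>q. c)"
  unfolding good_def by auto

lemma good_comp:
  assumes cl: "\<forall>q\<in>QB. \<forall>a. \<delta>B q a \<in> QB" and f: "good QB \<delta>B f" and g: "good QB \<delta>B g"
  shows "good QB \<delta>B (\<lambda>q. g (f q))"
proof -
  from f consider (a) ws where "\<forall>q\<in>QB. f q = foldl \<delta>B q ws" | (b) c where "c \<in> QB" "\<forall>q\<in>QB. f q = c"
    unfolding good_def by blast
  thus ?thesis
  proof cases
    case a
    from g consider (a2) ws' where "\<forall>q\<in>QB. g q = foldl \<delta>B q ws'" | (b2) c where "c \<in> QB" "\<forall>q\<in>QB. g q = c"
      unfolding good_def by blast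
    thus ?thesis
    proof cases
      case a2
      have "\<forall>q\<in>QB. g (f q) = foldl \<delta>B q (ws @ ws')"
        using a a2 foldl_in[OF cl] by simp
      thus ?thesis unfolding good_def by blast
    next
      case b2
      have "\<forall>q\<in>QB. g (f q) = c" using a b2 foldl_in[OF cl] by simp
      thus ?thesis using b2 unfolding good_def by blast
    qed
  next
    case b
    have "g c \<in> QB" using good_in[OF g cl b(1)] .
    moreover have "\<forall>q\<in>QB. g (f q) = g c" using b by simp
    ultimately show ?thesis unfolding good_def by blast
  qed
qed

lemma good_tact:
  assumes cl: "\<forall>q\<in>QB. \<forall>a. \<delta>B q a \<in> QB" and clD: "\<forall>d\<in>QD. \<forall>a. \<delta>D d a \<in> QD"
    and g: "\<And>d a. d \<in> QD \<Longrightarrow> good QB \<delta>B (\<tau> d a)"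
  shows "d \<in> QD \<Longrightarrow> good QB \<delta>B (tact \<delta>D \<tau> d w)"
proof (induction w arbitrary: d)
  case Nil thus ?case by (simp add: good_id)
next
  case (Cons a w)
  have "good QB \<delta>B (\<lambda>q. tact \<delta>D \<tau> (\<delta>D d a) w (\<tau> d a q))"
    using good_comp[OF cl g[OF Cons.prems] Cons.IH] clD Cons.prems by blast
  thus ?case by simp
qed

lemma tact_pow:
  assumes "foldl \<delta>D d w = d"
  shows "tact \<delta>D \<tau> d (concat (replicate k w)) q = (tact \<delta>D \<tau> d w ^^ k) q"
proof (induction k arbitrary: q)
  case 0 thus ?case by simp
next
  case (Suc k)
  have "tact \<delta>D \<tau> d (concat (replicate (Suc k) w)) q = tact \<delta>D \<tau> d (concat (replicate k w)) (tact \<delta>D \<tau> d w q)"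
    using assms by (simp add: tact_append)
  also have "\<dots> = (tact \<delta>D \<tau> d w ^^ k) (tact \<delta>D \<tau> d w q)" by (rule Suc.IH)
  finally show ?case by (simp add: funpow_swap1)
qed

lemma aperiodic_cascade:
  assumes "aut QD d0 \<delta>D" "finite QB" "\<forall>q\<in>QB. \<forall>a. \<delta>B q a \<in> QB"
    and g: "\<And>d a. d \<in> QD \<Longrightarrow> good QB \<delta>B (\<tau> d a)"
    and aD: "aperiodic_trans QD \<delta>D" and aB: "aperiodic_trans QB \<delta>B"
  shows "aperiodic_trans (prod_encode ` (QD \<times> QB)) (cdelta \<delta>D \<tau>)"
proof -
  have clD: "\<forall>d\<in>QD. \<forall>a. \<delta>D d a \<in> QD" using assms(1) unfolding aut_def by auto
  note clB = assms(3)
  obtain mD where mD: "\<forall>q\<in>QD. \<forall>w. foldl \<delta>D q (concat (replicate mD w)) = foldl \<delta>D q (concat (replicate (Suc mD) w))"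
    using aD unfolding aperiodic_trans_def by blast
  obtain mB where mB: "\<forall>q\<in>QB. \<forall>w. foldl \<delta>B q (concat (replicate mB w)) = foldl \<delta>B q (concat (replicate (Suc mB) w))"
    using aB unfolding aperiodic_trans_def by blast
  define m where "m = mD + Suc mB"
  have "\<forall>c\<in>prod_encode ` (QD \<times> QB). \<forall>w. foldl (cdelta \<delta>D \<tau>) c (concat (replicate m w)) =
          foldl (cdelta \<delta>D \<tau>) c (concat (replicate (Suc m) w))"
  proof (intro ballI allI)
    fix c and w :: "'a list" assume "c \<in> prod_encode ` (QD \<times> QB)"
    then obtain d q where c: "c = prod_encode (d, q)" and d: "d \<in> QD" and q: "q \<in> QB" by auto
    let ?W = "\<lambda>k. concat (replicate k w)"
    define d' where "d' = foldl \<delta>D d (?W mD)"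
    define q' where "q' = tact \<delta>D \<tau> d (?W mD) q"
    have d'Q: "d' \<in> QD" unfolding d'_def using foldl_in[OF clD d] .
    have q'Q: "q' \<in> QB" unfolding q'_def using good_in[OF good_tact[OF clB clD g d] clB q] .
    have fD: "foldl \<delta>D d (?W k) = d'" if "k \<ge> mD" for k
      unfolding d'_def using aperiodic_stable[OF clD d mD that] .
    have d'w: "foldl \<delta>D d' w = d'"
      using fD[of "mD + 1"] unfolding d'_def concat_rep_add by simp
    define f where "f = tact \<delta>D \<tau> d' w"
    have gf: "good QB \<delta>B f" unfolding f_def using good_tact[OF clB clD g d'Q] .
    have tk: "tact \<delta>D \<tau> d (?W (mD + k)) q = (f ^^ k) q'" for k
      unfolding f_def q'_def
      by (simp only: concat_rep_add tact_append d'_def[symmetric] tact_pow[OF d'w])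
    have fstab: "(f ^^ Suc mB) q' = (f ^^ Suc (Suc mB)) q'"
    proof -
      from gf consider (a) ws where "\<forall>q\<in>QB. f q = foldl \<delta>B q ws" | (b) c where "c \<in> QB" "\<forall>q\<in>QB. f q = c"
        unfolding good_def by blast
      thus ?thesis
      proof cases
        case a
        have "\<forall>p\<in>QB. (f ^^ k) p = foldl \<delta>B p (concat (replicate k ws))" for k
        proof (induction k)
          case 0 thus ?case by simp
        next
          case (Suc k)
          show ?case
          proof
            fix p assume p: "p \<in> QB"
            have "(f ^^ Suc k) p = (f ^^ k) (f p)" by (simp add: funpow_swap1)
            also have "\<dots> = foldl \<delta>B (foldl \<delta>B p ws) (concat (replicate k ws))"
              using Suc.IH a p foldl_in[OF clB p] by simp
            finally show "(f ^^ Suc k) p = foldl \<delta>B p (concat (replicate (Suc k) ws))" by simp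
          qed
        qed
        hence "(f ^^ Suc mB) q' = foldl \<delta>B q' (concat (replicate (Suc mB) ws))"
          and "(f ^^ Suc (Suc mB)) q' = foldl \<delta>B q' (concat (replicate (Suc (Suc mB)) ws))"
          using q'Q by blast+
        moreover have "foldl \<delta>B q' (concat (replicate (Suc mB) ws)) = foldl \<delta>B q' (concat (replicate mB ws))"
          by (rule aperiodic_stable[OF clB q'Q mB]) simp
        moreover have "foldl \<delta>B q' (concat (replicate (Suc (Suc mB)) ws)) = foldl \<delta>B q' (concat (replicate mB ws))"
          by (rule aperiodic_stable[OF clB q'Q mB]) simp
        ultimately show ?thesis by simp
      next
        case b
        have "\<forall>p\<in>QB. (f ^^ Suc k) p = c" for k
        proof (induction k)
          case 0 thus ?case using b by simp
        next
          case (Suc k) thus ?case using b by auto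
        qed
        thus ?thesis using q'Q by metis
      qed
    qed
    show "foldl (cdelta \<delta>D \<tau>) c (?W m) = foldl (cdelta \<delta>D \<tau>) c (?W (Suc m))"
      unfolding c foldl_cdelta
      using fD[of m] fD[of "Suc m"] tk[of "Suc mB"] tk[of "Suc (Suc mB)"] fstab
      unfolding m_def by simp
  qed
  thus ?thesis unfolding aperiodic_trans_def by blast
qed

section \<open>Certificates for concrete automata\<close>

definition cert2 :: "(nat \<Rightarrow> bool \<Rightarrow> nat) \<Rightarrow> nat \<Rightarrow> nat \<Rightarrow> nat list list \<Rightarrow> (nat \<times> nat) list \<Rightarrow> bool" where
 "cert2 \<delta> n m M S \<longleftrightarrow> M \<noteq> [] \<and> hd M = [0..<n] \<and> length S = length M \<and>
    list_all (\<lambda>(t,(i,j)). i < length M \<and> j < length M \<and> map (\<lambda>q. \<delta> q True) t = M!i \<and> map (\<lambda>q. \<delta> q False) t = M!j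
    \<and> map (\<lambda>q. ((\<lambda>q. t!q)^^m) q) [0..<n] = map (\<lambda>q. ((\<lambda>q. t!q)^^(Suc m)) q) [0..<n]) (zip M S)"

lemma cert2_sound:
  assumes c: "cert2 \<delta> n m M S" and cl: "\<forall>q<n. \<forall>a. \<delta> q a < n"
  shows "aperiodic_trans {0..<n} \<delta>"
proof -
  have cl': "\<forall>q\<in>{0..<n}. \<forall>a. \<delta> q a \<in> {0..<n}" using cl by auto
  have la: "list_all (\<lambda>(t,(i,j)). i < length M \<and> j < length M \<and> map (\<lambda>q. \<delta> q True) t = M!i \<and> map (\<lambda>q. \<delta> q False) t = M!j
    \<and> map (\<lambda>q. ((\<lambda>q. t!q)^^m) q) [0..<n] = map (\<lambda>q. ((\<lambda>q. t!q)^^(Suc m)) q) [0..<n]) (zip M S)"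
    and len: "length S = length M" and hd: "M \<noteq> []" "hd M = [0..<n]"
    using c unfolding cert2_def by auto
  have P: "\<exists>i j. i < length M \<and> j < length M \<and> map (\<lambda>q. \<delta> q True) t = M!i \<and> map (\<lambda>q. \<delta> q False) t = M!j
    \<and> map (\<lambda>q. ((\<lambda>q. t!q)^^m) q) [0..<n] = map (\<lambda>q. ((\<lambda>q. t!q)^^(Suc m)) q) [0..<n]"
    if tM: "t \<in> set M" for t
  proof -
    obtain k where k: "k < length M" "M ! k = t" using tM unfolding in_set_conv_nth by blast
    have "(M!k, S!k) \<in> set (zip M S)" unfolding in_set_conv_nth using k len by (intro exI[of _ k]) auto
    hence "(\<lambda>(t,(i,j)). i < length M \<and> j < length M \<and> map (\<lambda>q. \<delta> q True) t = M!i \<and> map (\<lambda>q. \<delta> q False) t = M!j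
    \<and> map (\<lambda>q. ((\<lambda>q. t!q)^^m) q) [0..<n] = map (\<lambda>q. ((\<lambda>q. t!q)^^(Suc m)) q) [0..<n]) (M!k, S!k)"
      using la unfolding list_all_iff by (rule bspec[rotated])
    moreover obtain i j where "S!k = (i,j)" by (cases "S!k")
    ultimately show ?thesis using k(2) by (intro exI[of _ i] exI[of _ j]) simp
  qed
  have all: "map (\<lambda>q. foldl \<delta> q w) [0..<n] \<in> set M" for w
  proof (induction w rule: rev_induct)
    case Nil
    have "map (\<lambda>q. foldl \<delta> q []) [0..<n] = hd M" using hd by simp
    thus ?case using hd_in_set[OF hd(1)] by simp
  next
    case (snoc a w)
    from P[OF snoc] obtain i j where ij: "i < length M" "j < length M"
      "map (\<lambda>q. \<delta> q True) (map (\<lambda>q. foldl \<delta> q w) [0..<n]) = M!i"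
      "map (\<lambda>q. \<delta> q False) (map (\<lambda>q. foldl \<delta> q w) [0..<n]) = M!j" by blast
    from ij(3,4) have e: "map (\<lambda>q. \<delta> (foldl \<delta> q w) True) [0..<n] = M!i"
      "map (\<lambda>q. \<delta> (foldl \<delta> q w) False) [0..<n] = M!j" by (simp_all add: comp_def)
    have mi: "M!i \<in> set M" "M!j \<in> set M" using ij(1,2) by (auto intro: nth_mem)
    show ?case
    proof (cases a)
      case True
      have "map (\<lambda>q. foldl \<delta> q (w @ [a])) [0..<n] = M!i" using e True by simp
      thus ?thesis using mi by simp
    next
      case False
      have "map (\<lambda>q. foldl \<delta> q (w @ [a])) [0..<n] = M!j" using e False by simp
      thus ?thesis using mi by simp
    qed
  qed
  have "\<forall>q\<in>{0..<n}. \<forall>w. foldl \<delta> q (concat (replicate m w)) = foldl \<delta> q (concat (replicate (Suc m) w))"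
  proof (intro ballI allI)
    fix q w assume q: "q \<in> {0..<n}"
    define t where "t = map (\<lambda>q. foldl \<delta> q w) [0..<n]"
    have pw: "\<forall>p<n. ((\<lambda>q. t!q)^^k) p = foldl \<delta> p (concat (replicate k w))" for k
    proof (induction k)
      case 0 thus ?case by simp
    next
      case (Suc k)
      show ?case
      proof (intro allI impI)
        fix p assume p: "p < n"
        have fp: "foldl \<delta> p w < n" using foldl_in[OF cl', of p w] p by auto
        have "((\<lambda>q. t!q)^^Suc k) p = ((\<lambda>q. t!q)^^k) (t!p)" by (simp only: funpow_Suc_right o_apply)
        also have "\<dots> = foldl \<delta> (foldl \<delta> p w) (concat (replicate k w))"
          using Suc.IH fp p unfolding t_def by simp
        finally show "((\<lambda>q. t!q)^^Suc k) p = foldl \<delta> p (concat (replicate (Suc k) w))" by simp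
      qed
    qed
    have "map (\<lambda>q. ((\<lambda>q. t!q)^^m) q) [0..<n] = map (\<lambda>q. ((\<lambda>q. t!q)^^(Suc m)) q) [0..<n]"
      using P[OF all[of w]] unfolding t_def by blast
    hence hm: "((\<lambda>q. t!q)^^m) q = ((\<lambda>q. t!q)^^(Suc m)) q" using q by (simp only: map_eq_conv) simp
    have qn: "q < n" using q by simp
    have A: "((\<lambda>q. t!q)^^m) q = foldl \<delta> q (concat (replicate m w))" using pw[of m] qn by blast
    have B: "((\<lambda>q. t!q)^^(Suc m)) q = foldl \<delta> q (concat (replicate (Suc m) w))" using pw[of "Suc m"] qn by blast
    show "foldl \<delta> q (concat (replicate m w)) = foldl \<delta> q (concat (replicate (Suc m) w))"
      using hm by (simp only: A B)
  qed
  thus ?thesis unfolding aperiodic_trans_def by blast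
qed

section \<open>The automaton D1 for the coding f\<close>

definition d1 :: "nat \<Rightarrow> bool \<Rightarrow> nat" where
 "d1 s a = (if s = 0 then (if a then 1 else 9) else if s = 1 then (if a then 2 else 9)
   else if s = 2 then (if a then 9 else 3) else if s = 3 then (if a then 5 else 4)
   else if s = 4 then (if a then 8 else 6) else if s = 5 then (if a then 9 else 7)
   else if s = 6 \<or> s = 7 \<or> s = 8 then (if a then 9 else 0) else 9)"

lemma d1_cert: "cert2 d1 10 5 [[0,1,2,3,4,5,6,7,8,9], [0,9,9,9,9,9,9,9,9,9], [1,2,9,5,8,9,9,9,9,9], [1,9,9,9,9,9,9,9,9,9], [2,9,9,9,9,9,9,9,9,9], [3,9,9,9,9,9,9,9,9,9], [4,9,9,9,9,9,9,9,9,9], [5,9,9,9,9,9,9,9,9,9], [6,9,9,9,9,9,9,9,9,9], [7,9,9,9,9,9,9,9,9,9], [8,9,9,9,9,9,9,9,9,9], [9,0,9,9,9,9,9,9,9,9], [9,1,9,9,9,9,9,9,9,9], [9,2,9,9,9,9,9,9,9,9], [9,3,9,7,0,9,9,9,9,9], [9,3,9,9,9,9,9,9,9,9], [9,4,9,0,9,9,9,9,9,9], [9,4,9,9,9,9,9,9,9,9], [9,5,9,9,1,9,9,9,9,9], [9,5,9,9,9,9,9,9,9,9], [9,6,9,9,9,9,9,9,9,9], [9,7,9,9,9,9,9,9,9,9], [9,8,9,1,9,9,9,9,9,9], [9,8,9,9,9,9,9,9,9,9], [9,9,0,9,9,9,9,9,9,9], [9,9,1,9,9,9,9,9,9,9],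 [9,9,2,9,9,9,9,9,9,9], [9,9,3,4,6,7,0,0,0,9], [9,9,3,9,9,9,9,9,9,9], [9,9,4,6,0,0,9,9,9,9], [9,9,4,9,9,9,9,9,9,9], [9,9,5,8,9,9,1,1,1,9], [9,9,5,9,9,9,9,9,9,9], [9,9,6,0,9,9,9,9,9,9], [9,9,6,9,9,9,9,9,9,9], [9,9,7,0,9,9,9,9,9,9], [9,9,7,9,9,9,9,9,9,9], [9,9,8,9,1,1,9,9,9,9], [9,9,8,9,9,9,9,9,9,9], [9,9,9,0,9,9,9,9,9,9], [9,9,9,1,9,9,9,9,9,9], [9,9,9,2,9,9,9,9,9,9], [9,9,9,3,9,9,9,9,9,9], [9,9,9,4,9,9,9,9,9,9], [9,9,9,5,9,9,9,9,9,9], [9,9,9,6,9,9,9,9,9,9], [9,9,9,7,9,9,9,9,9,9], [9,9,9,8,9,9,9,9,9,9], [9,9,9,9,0,0,9,9,9,9], [9,9,9,9,0,9,9,9,9,9], [9,9,9,9,1,1,9,9,9,9], [9,9,9,9,1,9,9,9,9,9], [9,9,9,9,2,2,9,9,9,9], [9,9,9,9,2,9,9,9,9,9], [9,9,9,9,3,3,9,9,9,9], [9,9,9,9,3,9,9,9,9,9], [9,9,9,9,4,4,9,9,9,9], [9,9,9,9,4,9,9,9,9,9], [9,9,9,9,5,5,9,9,9,9], [9,9,9,9,5,9,9,9,9,9], [9,9,9,9,6,6,9,9,9,9], [9,9,9,9,6,9,9,9,9,9], [9,9,9,9,7,7,9,9,9,9], [9,9,9,9,7,9,9,9,9,9], [9,9,9,9,8,8,9,9,9,9],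 [9,9,9,9,8,9,9,9,9,9], [9,9,9,9,9,9,0,0,0,9], [9,9,9,9,9,9,1,1,1,9], [9,9,9,9,9,9,2,2,2,9], [9,9,9,9,9,9,3,3,3,9], [9,9,9,9,9,9,4,4,4,9], [9,9,9,9,9,9,5,5,5,9], [9,9,9,9,9,9,6,6,6,9], [9,9,9,9,9,9,7,7,7,9], [9,9,9,9,9,9,8,8,8,9], [9,9,9,9,9,9,9,9,9,9]] [(2,27), (3,75), (4,14), (4,75), (75,5), (7,6), (10,8), (75,9), (75,1), (75,1), (75,1), (12,75), (13,75), (75,15), (18,16), (19,17), (22,20), (23,20), (53,21), (75,21), (75,11), (75,11), (41,11), (75,11), (25,75), (26,75), (75,28), (31,29), (32,30), (37,33), (38,34), (68,35), (75,36), (40,24), (75,24), (40,24), (75,24), (52,24), (75,24), (40,75), (41,75), (75,42), (44,43), (47,45), (75,46), (75,39), (75,39), (75,39), (50,75), (51,75), (52,75), (53,75), (75,54), (75,55), (58,56), (59,57), (64,60), (65,61), (75,62), (75,63), (75,48), (75,49), (75,48), (75,49), (75,48), (75,49), (67,75), (68,75), (75,69), (71,70), (74,72), (75,73), (75,66), (75,66), (75,66), (75,75)]"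
  by code_simp

lemma d1_cl: "\<forall>q<10. \<forall>a. d1 q a < (10::nat)"
  by (auto simp: d1_def)

lemma d1_aper: "aperiodic_trans {0..<10} d1"
  by (rule cert2_sound[OF d1_cert d1_cl])

lemma d1_aut: "aut {0..<10} 0 d1"
  using d1_cl unfolding aut_def by auto


definition blk :: "bool word \<Rightarrow> nat \<Rightarrow> bool list" where "blk \<xi> b = \<xi> [6*b \<rightarrow> 6*b+6]"
definition codes :: "bool list set" where "codes = {tl6 0, tl6 1, tl6 2}"
definition dec :: "bool list \<Rightarrow> nat" where "dec s = (if s = tl6 1 then 1 else if s = tl6 2 then 2 else 0)"
definition tau :: "bool word \<Rightarrow> nat \<Rightarrow> nat" where "tau \<xi> b = dec (blk \<xi> b)"
definition valid :: "bool word \<Rightarrow> bool" where "valid \<xi> \<longleftrightarrow> (\<forall>b. blk \<xi> b \<in> codes)"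

lemma tl6_len[simp]: "length (tl6 x) = 6" by (simp add: tl6_def)
lemma le2_cases: "(x::nat) \<le> 2 \<Longrightarrow> x = 0 \<or> x = 1 \<or> x = 2" by auto
lemma dec_tl6: "x \<le> 2 \<Longrightarrow> dec (tl6 x) = x"
  by (drule le2_cases) (auto simp: dec_def tl6_def)
lemma blk_len[simp]: "length (blk \<xi> b) = 6" by (simp add: blk_def subsequence_def)
lemma blk_nth: "r < 6 \<Longrightarrow> blk \<xi> b ! r = \<xi> (6*b + r)" by (simp add: blk_def subsequence_def)

lemma valid_tau: "valid \<xi> \<Longrightarrow> blk \<xi> b = tl6 (tau \<xi> b) \<and> tau \<xi> b \<le> 2"
  unfolding valid_def codes_def tau_def by (auto simp: dec_def tl6_def)

lemma valid_fenc: assumes "valid \<xi>" shows "\<xi> = fenc (tau \<xi>)"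
proof
  fix n
  have "\<xi> n = blk \<xi> (n div 6) ! (n mod 6)" by (simp add: blk_nth)
  thus "\<xi> n = fenc (tau \<xi>) n" using valid_tau[OF assms] by (simp add: fenc_def)
qed

lemma fenc_blk: "blk (fenc \<tau>) b = tl6 (\<tau> b)"
  by (rule nth_equalityI) (auto simp: blk_nth fenc_def)

lemma fenc_valid: assumes "ternary \<tau>" shows "valid (fenc \<tau>)" "tau (fenc \<tau>) = \<tau>"
proof -
  have "blk (fenc \<tau>) b \<in> codes" for b
    using le2_cases[OF assms[unfolded ternary_def, rule_format, of b]] by (auto simp: fenc_blk codes_def)
  thus "valid (fenc \<tau>)" unfolding valid_def by blast
  show "tau (fenc \<tau>) = \<tau>"
    using assms unfolding ternary_def by (auto simp: fenc_blk tau_def dec_tl6)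
qed

lemma valid_ternary: "valid \<xi> \<Longrightarrow> ternary (tau \<xi>)"
  using valid_tau unfolding ternary_def by blast

lemma fenc_image: "\<xi> \<in> fenc ` {\<eta>. ternary \<eta>} \<longleftrightarrow> valid \<xi>"
  using fenc_valid valid_fenc valid_ternary by blast

definition st :: "nat \<Rightarrow> nat \<Rightarrow> nat" where
  "st x r = (if r < 4 then r else if r = 4 then (if x = 1 then 5 else 4) else 6 + x)"

lemma block_run: "x \<le> 2 \<Longrightarrow> r < 6 \<Longrightarrow> foldl d1 0 (take r (tl6 x)) = st x r"
  apply (drule le2_cases)
  apply (subgoal_tac "r = 0 \<or> r = 1 \<or> r = 2 \<or> r = 3 \<or> r = 4 \<or> r = 5")
   apply (auto simp: tl6_def d1_def st_def numeral_eq_Suc)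
  done

lemma block_run6: "x \<le> 2 \<Longrightarrow> foldl d1 0 (tl6 x) = 0"
  by (drule le2_cases) (auto simp: tl6_def d1_def)

lemma block_bad: assumes "length s = 6" "s \<notin> codes" shows "foldl d1 0 s = 9"
proof -
  obtain a1 a2 a3 a4 a5 a6 where s: "s = [a1,a2,a3,a4,a5,a6]"
    using assms(1) by (auto simp: numeral_eq_Suc length_Suc_conv)
  show ?thesis using assms(2) unfolding s codes_def
    by (cases a1; cases a2; cases a3; cases a4; cases a5; cases a6) (simp_all add: d1_def tl6_def)
qed

lemma d1_9: "d1 9 a = 9" by (simp add: d1_def)
lemma d1_sink: "foldl d1 9 s = 9" by (induction s) (auto simp: d1_9)

lemma run_blk: assumes "r \<le> 6"
  shows "run d1 0 \<xi> (6*b + r) = foldl d1 (run d1 0 \<xi> (6*b)) (take r (blk \<xi> b))"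
proof -
  have "take r (blk \<xi> b) = map \<xi> [6*b..<6*b+r]"
    using assms by (simp add: blk_def subsequence_def take_map take_upt)
  thus ?thesis by (simp add: run_add)
qed

lemma run_valid0: "valid \<xi> \<Longrightarrow> run d1 0 \<xi> (6*b) = 0"
proof (induction b)
  case 0 thus ?case by simp
next
  case (Suc b)
  have "run d1 0 \<xi> (6 * Suc b) = run d1 0 \<xi> (6*b + 6)" by (simp add: add.commute)
  also have "\<dots> = foldl d1 0 (blk \<xi> b)" using run_blk[of 6 \<xi> b] Suc by simp
  also have "\<dots> = 0" using valid_tau[OF Suc.prems] block_run6 by metis
  finally show ?case .
qed

lemma run_valid: assumes "valid \<xi>" shows "run d1 0 \<xi> n = st (tau \<xi> (n div 6)) (n mod 6)"
proof -
  have n: "n = 6 * (n div 6) + n mod 6" by simp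
  have "run d1 0 \<xi> n = foldl d1 0 (take (n mod 6) (tl6 (tau \<xi> (n div 6))))"
    using run_blk[of "n mod 6" \<xi> "n div 6"] run_valid0[OF assms] valid_tau[OF assms] n by simp
  also have "\<dots> = st (tau \<xi> (n div 6)) (n mod 6)"
    using block_run valid_tau[OF assms] by simp
  finally show ?thesis .
qed

lemma run_09: "run d1 0 \<xi> (6*b) = 0 \<or> run d1 0 \<xi> (6*b) = 9"
proof (induction b)
  case 0 thus ?case by simp
next
  case (Suc b)
  have e: "run d1 0 \<xi> (6 * Suc b) = foldl d1 (run d1 0 \<xi> (6*b)) (blk \<xi> b)"
    using run_blk[of 6 \<xi> b] by (simp add: add.commute)
  show ?case
  proof (cases "blk \<xi> b \<in> codes")
    case True
    hence "foldl d1 0 (blk \<xi> b) = 0" unfolding codes_def using block_run6 by auto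
    thus ?thesis using Suc e d1_sink by auto
  next
    case False
    hence "foldl d1 0 (blk \<xi> b) = 9" using block_bad by simp
    thus ?thesis using Suc e d1_sink by auto
  qed
qed

lemma run_invalid: assumes "\<not> valid \<xi>" shows "9 \<in> infs (run d1 0 \<xi>)"
proof -
  obtain b where b: "blk \<xi> b \<notin> codes" using assms unfolding valid_def by blast
  have "run d1 0 \<xi> (6*b+6) = 9"
    using run_blk[of 6 \<xi> b] run_09[of \<xi> b] block_bad[OF _ b] d1_sink by auto
  hence "run d1 0 \<xi> (6*b+6+k) = 9" for k by (simp only: run_add d1_sink)
  hence "\<forall>m. \<exists>n\<ge>m. run d1 0 \<xi> n = 9" by (metis le_add1 le_add2 add.commute)
  thus ?thesis by (simp add: infs_def INFM_nat_le)
qed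

lemma run_valid_no9: assumes "valid \<xi>" shows "9 \<notin> infs (run d1 0 \<xi>)"
proof
  assume "9 \<in> infs (run d1 0 \<xi>)"
  then obtain n where "run d1 0 \<xi> n = 9" by (auto simp: infs_def dest: INFM_EX)
  thus False using run_valid[OF assms, of n] valid_tau[OF assms, of "n div 6"] by (auto simp: st_def split: if_splits)
qed

lemma run_valid_8: assumes "valid \<xi>" shows "8 \<in> infs (run d1 0 \<xi>) \<longleftrightarrow> (\<exists>\<^sub>\<infinity>b. tau \<xi> b = 2)"
proof -
  have e: "run d1 0 \<xi> n = 8 \<longleftrightarrow> n mod 6 = 5 \<and> tau \<xi> (n div 6) = 2" for n
    using run_valid[OF assms, of n] valid_tau[OF assms, of "n div 6"] by (auto simp: st_def)
  show ?thesis
  proof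
    assume "8 \<in> infs (run d1 0 \<xi>)"
    hence H: "\<forall>m. \<exists>n\<ge>m. run d1 0 \<xi> n = 8" by (simp add: infs_def INFM_nat_le)
    have "\<forall>m. \<exists>b\<ge>m. tau \<xi> b = 2"
    proof
      fix m obtain n where "n \<ge> 6*m" "run d1 0 \<xi> n = 8" using H by blast
      thus "\<exists>b\<ge>m. tau \<xi> b = 2" using e by (intro exI[of _ "n div 6"]) auto
    qed
    thus "\<exists>\<^sub>\<infinity>b. tau \<xi> b = 2" by (simp add: INFM_nat_le)
  next
    assume "\<exists>\<^sub>\<infinity>b. tau \<xi> b = 2"
    hence H: "\<forall>m. \<exists>b\<ge>m. tau \<xi> b = 2" by (simp add: INFM_nat_le)
    have "\<forall>m. \<exists>n\<ge>m. run d1 0 \<xi> n = 8"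
    proof
      fix m obtain b where "b \<ge> m" "tau \<xi> b = 2" using H by blast
      thus "\<exists>n\<ge>m. run d1 0 \<xi> n = 8" using e by (intro exI[of _ "6*b+5"]) auto
    qed
    thus "8 \<in> infs (run d1 0 \<xi>)" by (simp add: infs_def INFM_nat_le)
  qed
qed


definition t1 :: "(nat \<Rightarrow> bool \<Rightarrow> nat) \<Rightarrow> nat \<Rightarrow> nat \<Rightarrow> bool \<Rightarrow> nat \<Rightarrow> nat" where
  "t1 \<delta>L q0L d a q = (if d1 d a = 6 then \<delta>L q False else if d1 d a = 7 then \<delta>L q True
      else if d1 d a = 8 then q0L else q)"

fun Qb :: "(nat \<Rightarrow> bool \<Rightarrow> nat) \<Rightarrow> nat \<Rightarrow> (nat \<Rightarrow> nat) \<Rightarrow> nat \<Rightarrow> nat" where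
  "Qb \<delta>L q0L \<tau> 0 = q0L"
| "Qb \<delta>L q0L \<tau> (Suc b) = (if \<tau> b = 2 then q0L else \<delta>L (Qb \<delta>L q0L \<tau> b) (\<tau> b = 1))"

lemma dm6: "(n::nat) = 6*q + r \<Longrightarrow> r < 6 \<Longrightarrow> n div 6 = q \<and> n mod 6 = r"
  by simp

lemma split6: obtains q r where "(n::nat) = 6*q + r" "r < 6" "n div 6 = q" "n mod 6 = r"
proof -
  have "n = 6*(n div 6) + n mod 6" by simp
  moreover have "n mod 6 < 6" by simp
  ultimately show ?thesis using that by blast
qed

lemma m6a: "(n::nat) mod 6 = 4 \<Longrightarrow> Suc n mod 6 = 5 \<and> Suc n div 6 = n div 6 \<and> (Suc n + 1) div 6 = Suc (n div 6) \<and> (n + 1) div 6 = n div 6"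
proof -
  assume a: "n mod 6 = 4"
  obtain q r where n: "n = 6 * q + r" "r < 6" "n mod 6 = r" by (rule split6)
  hence n': "n = 6 * q + 4" using a by simp
  show ?thesis unfolding n' by simp
qed

lemma m6b: "(n::nat) mod 6 \<noteq> 4 \<Longrightarrow> Suc n mod 6 \<noteq> 5 \<and> (Suc n + 1) div 6 = (n + 1) div 6"
proof -
  assume a: "n mod 6 \<noteq> 4"
  obtain q r where n: "n = 6 * q + r" "r < 6" "n mod 6 = r" by (rule split6)
  show ?thesis
  proof (cases "r = 5")
    case True
    have e: "Suc n = 6*(q+1) + 0" "Suc n + 1 = 6*(q+1) + 1" "n + 1 = 6*(q+1) + 0" using n True by simp_all
    have "Suc n mod 6 = 0" using dm6[OF e(1)] by simp
    moreover have "(Suc n + 1) div 6 = q+1" using dm6[OF e(2)] by simp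
    moreover have "(n + 1) div 6 = q+1" using dm6[OF e(3)] by simp
    ultimately show ?thesis by simp
  next
    case False
    hence r: "r + 2 < 6" using n a by simp
    have e: "Suc n = 6*q + (r+1)" "Suc n + 1 = 6*q + (r+2)" "n + 1 = 6*q + (r+1)" using n by simp_all
    have "Suc n mod 6 = r + 1" using dm6[OF e(1)] r by simp
    moreover have "(Suc n + 1) div 6 = q" using dm6[OF e(2)] r by simp
    moreover have "(n + 1) div 6 = q" using dm6[OF e(3)] r by simp
    ultimately show ?thesis using a n by simp
  qed
qed

lemma st_le5: "r \<noteq> 5 \<Longrightarrow> r < 6 \<Longrightarrow> st x r \<le> 5"
  unfolding st_def by auto

lemma crun_valid: assumes "valid \<xi>"
  shows "crun d1 0 (t1 \<delta>L q0L) q0L \<xi> n = Qb \<delta>L q0L (tau \<xi>) ((n+1) div 6)"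
proof (induction n)
  case 0 thus ?case by simp
next
  case (Suc n)
  have r: "d1 (run d1 0 \<xi> n) (\<xi> n) = st (tau \<xi> (Suc n div 6)) (Suc n mod 6)"
    using run_valid[OF assms, of "Suc n"] by simp
  have cs: "crun d1 0 (t1 \<delta>L q0L) q0L \<xi> (Suc n) = t1 \<delta>L q0L (run d1 0 \<xi> n) (\<xi> n) (Qb \<delta>L q0L (tau \<xi>) ((n+1) div 6))"
    using Suc.IH by simp
  show ?case
  proof (cases "n mod 6 = 4")
    case True
    note a = m6a[OF True]
    have x: "tau \<xi> (n div 6) \<le> 2" using valid_tau[OF assms] by blast
    have r': "d1 (run d1 0 \<xi> n) (\<xi> n) = 6 + tau \<xi> (n div 6)" using r a by (simp add: st_def)
    have "t1 \<delta>L q0L (run d1 0 \<xi> n) (\<xi> n) (Qb \<delta>L q0L (tau \<xi>) (n div 6)) = Qb \<delta>L q0L (tau \<xi>) (Suc (n div 6))"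
      using le2_cases[OF x] unfolding t1_def r' by (elim disjE) simp_all
    thus ?thesis using cs a by simp
  next
    case False
    note a = m6b[OF False]
    have "st (tau \<xi> (Suc n div 6)) (Suc n mod 6) \<le> 5" using a by (intro st_le5) simp_all
    hence "t1 \<delta>L q0L (run d1 0 \<xi> n) (\<xi> n) q = q" for q using r unfolding t1_def by simp
    thus ?thesis using cs a by simp
  qed
qed

lemma align: assumes v: "valid \<xi>" and e: "\<xi> [n \<rightarrow> n + 6] = tl6 2"
  shows "n mod 6 = 0 \<and> tau \<xi> (n div 6) = 2"
proof -
  have x: "\<xi> m = tl6 (tau \<xi> (m div 6)) ! (m mod 6)" for m
    using valid_fenc[OF v] by (metis fenc_def)
  have e0: "\<xi> n = True" and e1: "\<xi> (Suc n) = True"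
    using arg_cong[OF e, of "\<lambda>l. l ! 0"] arg_cong[OF e, of "\<lambda>l. l ! 1"]
    by (simp_all add: subsequence_def tl6_def)
  have t2: "tau \<xi> (n div 6) \<le> 2" using valid_tau[OF v] by blast
  show ?thesis
  proof (cases "n mod 6 = 0")
    case True
    hence "blk \<xi> (n div 6) = tl6 2" using e unfolding blk_def by (metis mult_div_mod_eq add_0_right)
    thus ?thesis using True valid_tau[OF v, of "n div 6"] dec_tl6[OF t2] by (metis tau_def dec_tl6 order_refl)
  next
    case False
    obtain q r where n: "n = 6*q + r" "r < 6" "n div 6 = q" "n mod 6 = r" by (rule split6)
    show ?thesis
    proof (cases "r = 5")
      case True
      thus ?thesis using e0 x[of n] le2_cases[OF t2] n by (auto simp: tl6_def)
    next
      case F5: False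
      have r4: "r + 1 < 6" using F5 n by simp
      have sn: "Suc n = 6*q + (r+1)" using n by simp
      have s: "Suc n div 6 = n div 6" "Suc n mod 6 = Suc (n mod 6)" using dm6[OF sn r4] n by simp_all
      have "r = 0 \<or> r = 1 \<or> r = 2 \<or> r = 3 \<or> r = 4 \<or> r = 5" using n by auto
      hence "n mod 6 = 1 \<or> n mod 6 = 2 \<or> n mod 6 = 3 \<or> n mod 6 = 4" using False F5 n by auto
      thus ?thesis using e0 e1 x[of n] x[of "Suc n"] s le2_cases[OF t2]
        by (auto simp: tl6_def)
    qed
  qed
qed

lemma not_INFM_2: assumes v: "valid \<xi>" and f: "\<not> (\<exists>\<^sub>\<infinity>b. tau \<xi> b = 2)"
  shows "\<not> (\<exists>\<^sub>\<infinity>n. \<xi> [n \<rightarrow> n + 6] = tl6 2)"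
proof
  assume "\<exists>\<^sub>\<infinity>n. \<xi> [n \<rightarrow> n + 6] = tl6 2"
  hence H: "\<forall>m. \<exists>n\<ge>m. \<xi> [n \<rightarrow> n + 6] = tl6 2" by (simp add: INFM_nat_le)
  have "\<forall>m. \<exists>b\<ge>m. tau \<xi> b = 2"
  proof
    fix m obtain n where "n \<ge> 6*m" "\<xi> [n \<rightarrow> n + 6] = tl6 2" using H by blast
    thus "\<exists>b\<ge>m. tau \<xi> b = 2" using align[OF v] by (intro exI[of _ "n div 6"]) auto
  qed
  thus False using f by (simp add: INFM_nat_le)
qed

lemma INFM_2: assumes v: "valid \<xi>" and i: "\<exists>\<^sub>\<infinity>b. tau \<xi> b = 2"
  shows "\<exists>\<^sub>\<infinity>n. \<xi> [n \<rightarrow> n + 6] = tl6 2"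
proof -
  have H: "\<forall>m. \<exists>b\<ge>m. tau \<xi> b = 2" using i by (simp add: INFM_nat_le)
  have "\<forall>m. \<exists>n\<ge>m. \<xi> [n \<rightarrow> n + 6] = tl6 2"
  proof
    fix m obtain b where b: "b \<ge> m" "tau \<xi> b = 2" using H by blast
    have "\<xi> [6*b \<rightarrow> 6*b + 6] = tl6 2" using valid_tau[OF v, of b] b unfolding blk_def by simp
    thus "\<exists>n\<ge>m. \<xi> [n \<rightarrow> n + 6] = tl6 2" using b by (intro exI[of _ "6*b"]) auto
  qed
  thus ?thesis by (simp add: INFM_nat_le)
qed

lemma qop_bad: "\<not> valid \<xi> \<or> (valid \<xi> \<and> (\<exists>\<^sub>\<infinity>b. tau \<xi> b = 2)) \<Longrightarrow> qop i A \<xi> = i"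
  unfolding qop_def using fenc_image INFM_2 by auto

lemma ternary_bit: "ternary (bit \<circ> \<eta>)" by (auto simp: ternary_def bit_def)

lemma qop_no2: assumes v: "valid \<xi>" and n2: "\<forall>b. tau \<xi> b \<noteq> 2"
  shows "qop i A \<xi> = A (\<lambda>b. tau \<xi> b = 1)"
proof -
  have fin: "\<not> (\<exists>\<^sub>\<infinity>b. tau \<xi> b = 2)" using n2 by simp
  let ?\<eta> = "\<lambda>b. tau \<xi> b = 1"
  have bt: "bit \<circ> ?\<eta> = tau \<xi>"
  proof
    fix b have "tau \<xi> b \<le> 2" using valid_tau[OF v] by blast
    thus "(bit \<circ> ?\<eta>) b = tau \<xi> b" using n2[rule_format, of b] by (auto simp: bit_def)
  qed
  have ex: "\<xi> = fenc (bit \<circ> ?\<eta>)" using valid_fenc[OF v] bt by simp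
  have th: "(THE \<eta>. \<xi> = fenc (bit \<circ> \<eta>)) = ?\<eta>"
  proof (rule the_equality)
    show "\<xi> = fenc (bit \<circ> ?\<eta>)" by (rule ex)
  next
    fix \<eta> assume h: "\<xi> = fenc (bit \<circ> \<eta>)"
    hence "tau \<xi> = bit \<circ> \<eta>" using fenc_valid(2)[OF ternary_bit] by metis
    thus "\<eta> = ?\<eta>" by (auto simp: bit_def fun_eq_iff)
  qed
  have c1: "\<not> (\<xi> \<notin> fenc ` {\<eta>. ternary \<eta>} \<or> (\<exists>\<^sub>\<infinity>n. \<xi> [n \<rightarrow> n + 6] = tl6 2))"
    using fenc_image v not_INFM_2[OF v fin] by blast
  have c2: "\<exists>\<eta>. \<xi> = fenc (bit \<circ> \<eta>)" using ex by blast
  show ?thesis unfolding qop_def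
    by (rule trans[OF if_not_P[OF c1]], rule trans[OF if_P[OF c2]], simp only: th)
qed

lemma qop_last: assumes v: "valid \<xi>" and fin: "\<not> (\<exists>\<^sub>\<infinity>b. tau \<xi> b = 2)" and b0: "tau \<xi> b0 = 2"
    and after: "\<forall>b>b0. tau \<xi> b \<noteq> 2"
  shows "qop i A \<xi> = A (\<lambda>j. tau \<xi> (b0 + 1 + j) = 1)"
proof -
  let ?\<eta> = "\<lambda>j. tau \<xi> (b0 + 1 + j) = 1"
  have t2: "tau \<xi> b \<le> 2" for b using valid_tau[OF v] by blast
  have nex: "\<not> (\<exists>\<eta>. \<xi> = fenc (bit \<circ> \<eta>))"
  proof
    assume "\<exists>\<eta>. \<xi> = fenc (bit \<circ> \<eta>)"
    then obtain \<eta> where h: "\<xi> = fenc (bit \<circ> \<eta>)" by blast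
    hence "tau \<xi> = bit \<circ> \<eta>" using fenc_valid(2)[OF ternary_bit] by metis
    hence "tau \<xi> b0 \<le> 1" by (simp add: bit_def)
    thus False using b0 by simp
  qed
  define \<sigma> where "\<sigma> = map (tau \<xi>) [0..<b0]"
  have "\<forall>x. tau \<xi> x \<in> {0,1,2}" using t2 le2_cases by blast
  hence sig: "set \<sigma> \<subseteq> {0,1,2}" unfolding \<sigma>_def set_map image_subset_iff by (intro ballI) (rule spec)
  have cw: "(\<sigma> @ [2]) \<frown> (bit \<circ> ?\<eta>) = tau \<xi>"
  proof
    fix n
    show "((\<sigma> @ [2]) \<frown> (bit \<circ> ?\<eta>)) n = tau \<xi> n"
    proof (cases "n < b0")
      case True thus ?thesis by (simp add: conc_def \<sigma>_def nth_append)
    next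
      case False
      show ?thesis
      proof (cases "n = b0")
        case True thus ?thesis using b0 by (simp add: conc_def \<sigma>_def nth_append)
      next
        case F2: False
        hence nb: "n > b0" using False by simp
        hence "tau \<xi> n \<noteq> 2" using after by blast
        hence "bit (tau \<xi> n = 1) = tau \<xi> n" using t2[of n] by (auto simp: bit_def)
        moreover have "b0 + 1 + (n - Suc b0) = n" using nb by simp
        ultimately show ?thesis using nb by (simp add: conc_def \<sigma>_def)
      qed
    qed
  qed
  have th: "(THE \<eta>. \<exists>\<sigma>. set \<sigma> \<subseteq> {0,1,2} \<and> \<xi> = fenc ((\<sigma> @ [2]) \<frown> (bit \<circ> \<eta>))) = ?\<eta>"
  proof (rule the_equality)
    show "\<exists>\<sigma>. set \<sigma> \<subseteq> {0,1,2} \<and> \<xi> = fenc ((\<sigma> @ [2]) \<frown> (bit \<circ> ?\<eta>))"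
      using sig cw valid_fenc[OF v] by metis
  next
    fix \<eta> assume "\<exists>\<sigma>. set \<sigma> \<subseteq> {0,1,2} \<and> \<xi> = fenc ((\<sigma> @ [2]) \<frown> (bit \<circ> \<eta>))"
    then obtain \<sigma>' where s': "set \<sigma>' \<subseteq> {0,1,2}" and h: "\<xi> = fenc ((\<sigma>' @ [2]) \<frown> (bit \<circ> \<eta>))" by blast
    define T where "T = (\<sigma>' @ [2]) \<frown> (bit \<circ> \<eta>)"
    have ter: "ternary T"
      unfolding ternary_def
    proof
      fix j show "T j \<le> 2"
      proof (cases "j < length \<sigma>'")
        case True
        have "\<sigma>' ! j \<in> {0,1,2}" using subsetD[OF s' nth_mem[OF True]] .
        hence "\<sigma>' ! j \<le> 2" by auto
        thus ?thesis using True by (auto simp: T_def conc_def nth_append)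
      next
        case False thus ?thesis by (auto simp: T_def conc_def nth_append bit_def)
      qed
    qed
    have tt: "tau \<xi> = T" using fenc_valid(2)[OF ter] h unfolding T_def by simp
    have "tau \<xi> (length \<sigma>') = 2" using tt by (simp add: T_def conc_def)
    hence l1: "length \<sigma>' \<le> b0" using after by (meson not_le)
    have l2: "\<not> length \<sigma>' < b0"
    proof
      assume "length \<sigma>' < b0"
      hence "T b0 = bit (\<eta> (b0 - Suc (length \<sigma>')))" by (simp add: T_def conc_def)
      thus False using tt b0 by (simp add: bit_def split: if_splits)
    qed
    hence l: "length \<sigma>' = b0" using l1 by simp
    show "\<eta> = ?\<eta>"
    proof
      fix j
      have "tau \<xi> (b0 + 1 + j) = bit (\<eta> j)" using tt l by (simp add: T_def conc_def)
      thus "\<eta> j = ?\<eta> j" by (simp add: bit_def)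
    qed
  qed
  have c1: "\<not> (\<xi> \<notin> fenc ` {\<eta>. ternary \<eta>} \<or> (\<exists>\<^sub>\<infinity>n. \<xi> [n \<rightarrow> n + 6] = tl6 2))"
    using fenc_image v not_INFM_2[OF v fin] by blast
  show ?thesis unfolding qop_def
    by (rule trans[OF if_not_P[OF c1]], rule trans[OF if_not_P[OF nex]], simp only: th)
qed


section \<open>Muller automata for q_i\<close>

lemma stretch6:
  assumes "\<And>n. N \<le> n \<Longrightarrow> x n = y ((n+1) div 6 - c)"
  shows "infs x = infs y"
proof (rule infs_stretch[where g="\<lambda>n. (n+1) div 6 - c" and N=N and x=x and y=y, OF assms])
  show "(n + 1) div 6 - c \<le> (Suc n + 1) div 6 - c" for n by (simp add: diff_le_mono div_le_mono)
  show "(Suc n + 1) div 6 - c \<le> Suc ((n + 1) div 6 - c)" for n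
  proof -
    have "(Suc n + 1) div 6 \<le> (n + 1 + 6) div 6" by (intro div_le_mono) simp
    also have "\<dots> = (n + 1) div 6 + 1" by simp
    finally show ?thesis by linarith
  qed
  show "\<exists>n. m \<le> (n + 1) div 6 - c" for m
  proof -
    have "(6*(m+c) + 1) div 6 = m + c" using dm6[of "6*(m+c) + 1" "m+c" 1] by simp
    thus ?thesis by (intro exI[of _ "6*(m+c)"]) simp
  qed
qed

definition Phi1 :: "nat \<Rightarrow> nat \<Rightarrow> nat set set \<Rightarrow> nat set \<Rightarrow> nat set \<Rightarrow> bool" where
  "Phi1 i j FL D Q \<longleftrightarrow> (if 9 \<in> D \<or> 8 \<in> D then i = j else Q \<in> FL)"

lemma qop_pre:
  assumes mr: "muller_recognises QL q0L \<delta>L FL (A -` {j})"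
  shows "qop i A \<xi> = j \<longleftrightarrow> Phi1 i j FL (infs (run d1 0 \<xi>)) (infs (crun d1 0 (t1 \<delta>L q0L) q0L \<xi>))"
proof -
  have acc: "A \<eta> = j \<longleftrightarrow> infs (run \<delta>L q0L \<eta>) \<in> FL" for \<eta> using muller_recognisesD[OF mr] by auto
  show ?thesis
  proof (cases "valid \<xi>")
    case False
    thus ?thesis using run_invalid[OF False] qop_bad[of \<xi> i A] by (auto simp: Phi1_def)
  next
    case v: True
    show ?thesis
    proof (cases "\<exists>\<^sub>\<infinity>b. tau \<xi> b = 2")
      case True
      thus ?thesis using run_valid_8[OF v] qop_bad[of \<xi> i A] v by (auto simp: Phi1_def)
    next
      case fin: False
      have n89: "9 \<notin> infs (run d1 0 \<xi>)" "8 \<notin> infs (run d1 0 \<xi>)"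
        using run_valid_no9[OF v] run_valid_8[OF v] fin by auto
      have cr: "crun d1 0 (t1 \<delta>L q0L) q0L \<xi> n = Qb \<delta>L q0L (tau \<xi>) ((n+1) div 6)" for n
        by (rule crun_valid[OF v])
      show ?thesis
      proof (cases "\<forall>b. tau \<xi> b \<noteq> 2")
        case True
        let ?\<eta> = "\<lambda>b. tau \<xi> b = 1"
        have qb: "Qb \<delta>L q0L (tau \<xi>) b = run \<delta>L q0L ?\<eta> b" for b
          using True by (induction b) auto
        have "infs (crun d1 0 (t1 \<delta>L q0L) q0L \<xi>) = infs (run \<delta>L q0L ?\<eta>)"
          by (rule stretch6[where N=0 and c=0]) (simp add: cr qb)
        thus ?thesis using qop_no2[OF v True, of i A] acc n89 by (simp add: Phi1_def)
      next
        case False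
        have finS: "finite {b. tau \<xi> b = 2}" using fin by (simp add: INFM_iff_infinite)
        have neS: "{b. tau \<xi> b = 2} \<noteq> {}" using False by auto
        define b0 where "b0 = Max {b. tau \<xi> b = 2}"
        have b0: "tau \<xi> b0 = 2" using Max_in[OF finS neS] unfolding b0_def by simp
        have after: "\<forall>b>b0. tau \<xi> b \<noteq> 2"
        proof (intro allI impI notI)
          fix b assume b: "b0 < b" "tau \<xi> b = 2"
          hence "b \<le> b0" unfolding b0_def using Max_ge[OF finS] by simp
          thus False using b(1) by simp
        qed
        let ?\<eta> = "\<lambda>j. tau \<xi> (b0 + 1 + j) = 1"
        have qb: "Qb \<delta>L q0L (tau \<xi>) (b0 + 1 + k) = run \<delta>L q0L ?\<eta> k" for k
        proof (induction k)
          case 0 thus ?case using b0 by simp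
        next
          case (Suc k)
          have "tau \<xi> (b0 + 1 + k) \<noteq> 2" using after by simp
          thus ?case using Suc.IH by simp
        qed
        have "infs (crun d1 0 (t1 \<delta>L q0L) q0L \<xi>) = infs (run \<delta>L q0L ?\<eta>)"
        proof (rule stretch6[where N="6*b0+5" and c="b0+1"])
          fix n assume "6*b0+5 \<le> n"
          hence "(b0 + 1) * 6 \<le> n + 1" by simp
          hence "b0 + 1 \<le> (n+1) div 6" using less_eq_div_iff_mult_less_eq[of 6 "b0+1" "n+1"] by simp
          hence "(n+1) div 6 = b0 + 1 + ((n+1) div 6 - (b0+1))" by simp
          thus "crun d1 0 (t1 \<delta>L q0L) q0L \<xi> n = run \<delta>L q0L ?\<eta> ((n+1) div 6 - (b0+1))"
            using cr[of n] qb[of "(n+1) div 6 - (b0+1)"] by simp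
        qed
        thus ?thesis using qop_last[OF v fin b0 after, of i A] acc n89 by (simp add: Phi1_def)
      qed
    qed
  qed
qed

lemma t1_in: "q \<in> QL \<Longrightarrow> aut QL q0L \<delta>L \<Longrightarrow> t1 \<delta>L q0L d a q \<in> QL"
  unfolding t1_def aut_def by auto

lemma qop_muller:
  assumes mr: "muller_recognises QL q0L \<delta>L FL (A -` {j})"
  shows "muller_recognises (prod_encode ` ({0..<10} \<times> QL)) (prod_encode (0, q0L)) (cdelta d1 (t1 \<delta>L q0L))
           {S. Phi1 i j FL (p1 ` S) (p2 ` S)} (qop i A -` {j})"
proof -
  have aL: "aut QL q0L \<delta>L" using muller_recognisesD[OF mr] by blast
  have e: "qop i A -` {j} = {\<xi>. Phi1 i j FL (infs (run d1 0 \<xi>)) (infs (crun d1 0 (t1 \<delta>L q0L) q0L \<xi>))}"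
    using qop_pre[OF mr] by auto
  have "muller_recognises (prod_encode ` ({0..<10} \<times> QL)) (prod_encode (0, q0L)) (cdelta d1 (t1 \<delta>L q0L))
           {S. Phi1 i j FL (p1 ` S) (p2 ` S)}
           {\<xi>. Phi1 i j FL (infs (run d1 0 \<xi>)) (infs (crun d1 0 (t1 \<delta>L q0L) q0L \<xi>))}"
    by (rule cascade_muller[OF d1_aut]) (use aL t1_in in \<open>auto simp: aut_def\<close>)
  thus ?thesis using e by simp
qed

lemma good_t1: "q0L \<in> QL \<Longrightarrow> good QL \<delta>L (t1 \<delta>L q0L d a)"
proof -
  assume q: "q0L \<in> QL"
  consider "d1 d a = 6" | "d1 d a = 7" | "d1 d a = 8" | "d1 d a \<noteq> 6 \<and> d1 d a \<noteq> 7 \<and> d1 d a \<noteq> 8" by blast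
  thus ?thesis
  proof cases
    case 1
    hence "t1 \<delta>L q0L d a = (\<lambda>q. \<delta>L q False)" by (simp add: t1_def fun_eq_iff)
    thus ?thesis by (simp add: good_letter)
  next
    case 2
    hence "t1 \<delta>L q0L d a = (\<lambda>q. \<delta>L q True)" by (simp add: t1_def fun_eq_iff)
    thus ?thesis by (simp add: good_letter)
  next
    case 3
    hence "t1 \<delta>L q0L d a = (\<lambda>q. q0L)" by (simp add: t1_def fun_eq_iff)
    thus ?thesis using q by (simp add: good_const)
  next
    case 4
    hence "t1 \<delta>L q0L d a = (\<lambda>q. q)" by (simp add: t1_def fun_eq_iff)
    thus ?thesis by (simp add: good_id)
  qed
qed

lemma qop_aper:
  assumes aL: "aut QL q0L \<delta>L" and ap: "aperiodic_trans QL \<delta>L"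
  shows "aperiodic_trans (prod_encode ` ({0..<10} \<times> QL)) (cdelta d1 (t1 \<delta>L q0L))"
  by (rule aperiodic_cascade[OF d1_aut _ _ good_t1 d1_aper ap]) (use aL in \<open>auto simp: aut_def\<close>)

section \<open>The automaton D2 for the coding g\<close>

definition pat :: "nat \<Rightarrow> bool" where
  "pat r = [True,True,False,False,False,False,True,True,False,False,True,False] ! r"

definition d2 :: "nat \<Rightarrow> bool \<Rightarrow> nat" where
 "d2 s a = (if s = 12 then 12 else if s = 3 then 4 else
    if a = pat s then (if s = 11 then 0 else Suc s) else 12)"

lemma d2_cert: "cert2 d2 13 5 [[0,1,2,3,4,5,6,7,8,9,10,11,12], [0,12,12,12,12,12,12,12,12,12,12,12,12], [1,2,12,4,12,12,7,8,12,12,11,12,12], [1,12,12,12,12,12,12,12,12,12,12,12,12], [2,12,12,12,12,12,8,12,12,12,12,12,12], [2,12,12,12,12,12,12,12,12,12,12,12,12], [3,12,12,12,12,12,9,12,12,12,12,12,12], [3,12,12,12,12,12,12,12,12,12,12,12,12], [4,12,12,12,12,12,10,12,12,12,12,12,12], [4,12,12,12,12,12,12,12,12,12,12,12,12], [5,12,12,12,12,12,12,12,12,12,12,12,12], [6,12,12,12,12,12,12,12,12,12,12,12,12], [7,12,12,12,12,12,12,12,12,12,12,12,12], [8,12,12,12,12,12,12,12,12,12,12,12,12], [9,12,12,12,12,12,12,12,12,12,12,12,12], [10,12,12,12,12,12,12,12,12,12,12,12,12], [11,12,12,12,12,12,12,12,12,12,12,12,12], [12,0,12,12,12,12,12,12,12,12,12,12,12],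 [12,1,12,12,12,12,12,12,12,12,12,12,12], [12,2,12,12,12,12,12,12,12,12,12,12,12], [12,3,12,5,12,12,12,9,12,12,0,12,12], [12,3,12,12,12,12,12,12,12,12,12,12,12], [12,4,12,6,12,12,12,10,12,12,12,12,12], [12,4,12,12,12,12,12,12,12,12,1,12,12], [12,4,12,12,12,12,12,12,12,12,12,12,12], [12,5,12,12,12,12,12,12,12,12,12,12,12], [12,6,12,12,12,12,12,12,12,12,12,12,12], [12,7,12,12,12,12,12,12,12,12,12,12,12], [12,8,12,12,12,12,12,12,12,12,12,12,12], [12,9,12,12,12,12,12,12,12,12,12,12,12], [12,10,12,12,12,12,12,12,12,12,12,12,12], [12,11,12,12,12,12,12,12,12,12,12,12,12], [12,12,0,12,12,12,12,12,12,12,12,12,12], [12,12,1,12,12,12,12,12,12,12,12,12,12], [12,12,2,12,12,12,12,12,12,12,12,12,12], [12,12,3,4,5,6,12,12,9,10,12,0,12], [12,12,3,12,12,12,12,12,12,12,12,12,12], [12,12,4,5,6,12,12,12,10,12,12,12,12], [12,12,4,12,12,7,12,12,12,11,12,1,12], [12,12,4,12,12,12,12,12,12,12,12,12,12], [12,12,5,6,12,12,12,12,12,12,12,12,12], [12,12,5,12,12,12,12,12,12,0,12,12,12], [12,12,5,12,12,12,12,12,12,12,12,12,12], [12,12,6,12,12,12,12,12,12,12,12,12,12], [12,12,7,12,12,12,12,12,12,12,12,12,12], [12,12,8,12,12,12,12,12,12,12,12,12,12], [12,12,9,12,12,12,12,12,12,12,12,12,12], [12,12,10,12,12,12,12,12,12,12,12,12,12],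 [12,12,11,12,12,12,12,12,12,12,12,12,12], [12,12,12,0,12,12,12,12,12,12,12,12,12], [12,12,12,1,12,12,12,12,12,12,12,12,12], [12,12,12,2,12,12,12,12,12,12,12,12,12], [12,12,12,3,12,12,12,12,12,12,12,12,12], [12,12,12,4,12,12,12,12,12,12,12,12,12], [12,12,12,5,12,12,12,12,12,12,12,12,12], [12,12,12,6,12,12,12,12,12,12,12,12,12], [12,12,12,7,12,12,12,11,12,12,12,12,12], [12,12,12,7,12,12,12,12,12,12,12,12,12], [12,12,12,8,12,12,12,12,12,12,12,12,12], [12,12,12,9,12,12,12,12,12,12,12,12,12], [12,12,12,10,12,12,12,12,12,12,12,12,12], [12,12,12,11,12,12,12,12,12,12,12,12,12], [12,12,12,12,0,12,12,12,12,12,12,12,12], [12,12,12,12,1,12,12,12,12,12,12,12,12], [12,12,12,12,2,12,12,12,12,12,12,12,12], [12,12,12,12,3,12,12,12,12,12,12,12,12], [12,12,12,12,4,12,12,12,12,12,12,12,12], [12,12,12,12,5,12,12,12,12,12,12,12,12], [12,12,12,12,6,12,12,12,12,12,12,12,12], [12,12,12,12,7,12,12,12,11,12,12,12,12], [12,12,12,12,7,12,12,12,12,12,12,12,12], [12,12,12,12,8,12,12,12,12,12,12,12,12], [12,12,12,12,9,12,12,12,12,12,12,12,12], [12,12,12,12,10,12,12,12,12,12,12,12,12], [12,12,12,12,11,12,12,12,12,12,12,12,12], [12,12,12,12,12,0,12,12,12,12,12,12,12], [12,12,12,12,12,1,12,12,12,12,12,12,12], [12,12,12,12,12,2,12,12,12,12,12,12,12],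 [12,12,12,12,12,3,12,12,12,12,12,12,12], [12,12,12,12,12,4,12,12,12,12,12,12,12], [12,12,12,12,12,5,12,12,12,12,12,12,12], [12,12,12,12,12,6,12,12,12,12,12,12,12], [12,12,12,12,12,7,12,12,12,12,12,12,12], [12,12,12,12,12,8,12,12,12,12,12,2,12], [12,12,12,12,12,8,12,12,12,12,12,12,12], [12,12,12,12,12,9,12,12,12,12,12,3,12], [12,12,12,12,12,9,12,12,12,12,12,12,12], [12,12,12,12,12,10,12,12,12,12,12,4,12], [12,12,12,12,12,10,12,12,12,12,12,12,12], [12,12,12,12,12,11,12,12,12,12,12,12,12], [12,12,12,12,12,12,0,12,12,12,12,12,12], [12,12,12,12,12,12,1,12,12,12,12,12,12], [12,12,12,12,12,12,2,12,12,12,12,12,12], [12,12,12,12,12,12,3,12,12,12,12,12,12], [12,12,12,12,12,12,4,12,12,12,12,12,12], [12,12,12,12,12,12,5,12,12,12,12,12,12], [12,12,12,12,12,12,6,12,12,12,12,12,12], [12,12,12,12,12,12,7,12,12,12,12,12,12], [12,12,12,12,12,12,8,12,12,12,12,12,12], [12,12,12,12,12,12,9,12,12,12,12,12,12], [12,12,12,12,12,12,10,12,12,12,12,12,12], [12,12,12,12,12,12,11,12,12,12,12,12,12], [12,12,12,12,12,12,12,0,12,12,12,12,12], [12,12,12,12,12,12,12,1,12,12,12,12,12], [12,12,12,12,12,12,12,2,12,12,12,12,12], [12,12,12,12,12,12,12,3,12,12,12,12,12], [12,12,12,12,12,12,12,4,12,12,12,12,12], [12,12,12,12,12,12,12,5,12,12,12,12,12],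 [12,12,12,12,12,12,12,6,12,12,12,12,12], [12,12,12,12,12,12,12,7,12,12,12,12,12], [12,12,12,12,12,12,12,8,12,12,12,12,12], [12,12,12,12,12,12,12,9,12,12,12,12,12], [12,12,12,12,12,12,12,10,12,12,12,12,12], [12,12,12,12,12,12,12,11,12,12,12,12,12], [12,12,12,12,12,12,12,12,0,12,12,12,12], [12,12,12,12,12,12,12,12,1,12,12,12,12], [12,12,12,12,12,12,12,12,2,12,12,12,12], [12,12,12,12,12,12,12,12,3,12,12,12,12], [12,12,12,12,12,12,12,12,4,12,12,12,12], [12,12,12,12,12,12,12,12,5,12,12,12,12], [12,12,12,12,12,12,12,12,6,12,12,12,12], [12,12,12,12,12,12,12,12,7,12,12,12,12], [12,12,12,12,12,12,12,12,8,12,12,12,12], [12,12,12,12,12,12,12,12,9,12,12,12,12], [12,12,12,12,12,12,12,12,10,12,12,12,12], [12,12,12,12,12,12,12,12,11,12,12,12,12], [12,12,12,12,12,12,12,12,12,0,12,12,12], [12,12,12,12,12,12,12,12,12,1,12,12,12], [12,12,12,12,12,12,12,12,12,2,12,12,12], [12,12,12,12,12,12,12,12,12,3,12,12,12], [12,12,12,12,12,12,12,12,12,4,12,12,12], [12,12,12,12,12,12,12,12,12,5,12,12,12], [12,12,12,12,12,12,12,12,12,6,12,12,12], [12,12,12,12,12,12,12,12,12,7,12,12,12], [12,12,12,12,12,12,12,12,12,8,12,12,12], [12,12,12,12,12,12,12,12,12,9,12,12,12], [12,12,12,12,12,12,12,12,12,10,12,12,12], [12,12,12,12,12,12,12,12,12,11,12,12,12],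 [12,12,12,12,12,12,12,12,12,12,0,12,12], [12,12,12,12,12,12,12,12,12,12,1,12,12], [12,12,12,12,12,12,12,12,12,12,2,12,12], [12,12,12,12,12,12,12,12,12,12,3,12,12], [12,12,12,12,12,12,12,12,12,12,4,12,12], [12,12,12,12,12,12,12,12,12,12,5,12,12], [12,12,12,12,12,12,12,12,12,12,6,12,12], [12,12,12,12,12,12,12,12,12,12,7,12,12], [12,12,12,12,12,12,12,12,12,12,8,12,12], [12,12,12,12,12,12,12,12,12,12,9,12,12], [12,12,12,12,12,12,12,12,12,12,10,12,12], [12,12,12,12,12,12,12,12,12,12,11,12,12], [12,12,12,12,12,12,12,12,12,12,12,0,12], [12,12,12,12,12,12,12,12,12,12,12,1,12], [12,12,12,12,12,12,12,12,12,12,12,2,12], [12,12,12,12,12,12,12,12,12,12,12,3,12], [12,12,12,12,12,12,12,12,12,12,12,4,12], [12,12,12,12,12,12,12,12,12,12,12,5,12], [12,12,12,12,12,12,12,12,12,12,12,6,12], [12,12,12,12,12,12,12,12,12,12,12,7,12], [12,12,12,12,12,12,12,12,12,12,12,8,12], [12,12,12,12,12,12,12,12,12,12,12,9,12], [12,12,12,12,12,12,12,12,12,12,12,10,12], [12,12,12,12,12,12,12,12,12,12,12,11,12], [12,12,12,12,12,12,12,12,12,12,12,12,12]] [(2,35), (3,162), (4,20), (5,162), (162,6), (162,7), (9,8), (9,9), (101,10), (162,10), (162,11), (12,162), (13,162), (162,14), (162,15), (16,162), (162,1), (18,162), (19,162), (162,21), (23,22), (24,24), (56,25), (140,25), (162,25),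 (162,26), (27,162), (28,162), (162,29), (162,30), (31,162), (162,17), (33,162), (34,162), (162,36), (38,37), (39,39), (69,40), (83,41), (162,42), (57,43), (127,43), (162,43), (44,162), (45,162), (162,46), (162,47), (48,162), (162,32), (50,162), (51,162), (162,52), (53,53), (162,54), (162,55), (57,162), (58,102), (58,162), (162,59), (162,60), (61,162), (162,49), (63,162), (64,162), (162,65), (66,66), (162,67), (162,68), (70,162), (71,114), (71,162), (162,72), (162,73), (74,162), (162,62), (76,162), (77,162), (162,78), (79,79), (162,80), (162,81), (82,162), (84,162), (162,85), (162,86), (154,87), (162,88), (89,155), (89,162), (162,75), (91,162), (92,162), (162,93), (94,94), (162,95), (162,96), (97,162), (98,162), (162,99), (162,100), (101,162), (162,90), (103,162), (104,162), (162,105), (106,106), (162,107), (162,108), (109,162), (110,162), (162,111), (162,112), (113,162), (162,102), (115,162), (116,162), (162,117), (118,118), (162,119), (162,120), (121,162), (122,162), (162,123), (162,124), (125,162), (162,114), (127,162), (128,162), (162,129), (130,130), (162,131), (162,132), (133,162), (134,162), (162,135), (162,136), (137,162), (162,126), (139,162), (140,162), (162,141), (142,142), (162,143), (162,144), (145,162), (146,162), (162,147), (162,148), (149,162), (162,138), (151,162), (152,162), (162,153), (154,154), (162,155), (162,156), (157,162), (158,162), (162,159), (162,160), (161,162), (162,150), (162,162)]"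
  by code_simp

lemma d2_cl: "\<forall>q<13. \<forall>a. d2 q a < (13::nat)"
  by (auto simp: d2_def)

lemma d2_aper: "aperiodic_trans {0..<13} d2"
  by (rule cert2_sound[OF d2_cert d2_cl])

lemma d2_aut: "aut {0..<13} 0 d2"
  using d2_cl unfolding aut_def by auto


lemma r12_cases: "(r::nat) < 12 \<Longrightarrow> r = 0 \<or> r = 1 \<or> r = 2 \<or> r = 3 \<or> r = 4 \<or> r = 5 \<or> r = 6 \<or> r = 7 \<or> r = 8 \<or> r = 9 \<or> r = 10 \<or> r = 11"
  by (simp add: numeral_eq_Suc less_Suc_eq)

lemma genc_r: "r < 12 \<Longrightarrow> tl6 (if r < 6 then bit b else 2) ! (r mod 6) = (if r = 3 then b else pat r)"
  by (drule r12_cases) (cases b; auto simp: tl6_def pat_def bit_def)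

lemma blk12: "r < 12 \<Longrightarrow> r \<noteq> 3 \<Longrightarrow> (tl6 (bit x) @ tl6 2) ! r = pat r"
  by (drule r12_cases) (cases x; auto simp: tl6_def pat_def bit_def nth_append)

lemma genc_eq: "genc \<eta> n = (if n mod 12 = 3 then \<eta> (n div 12) else pat (n mod 12))"
proof -
  have "n mod 12 mod 6 = n mod 6" by (rule mod_mod_cancel) simp
  thus ?thesis unfolding genc_def using genc_r[of "n mod 12" "\<eta> (n div 12)"] by simp
qed

definition okp :: "bool word \<Rightarrow> nat \<Rightarrow> bool" where
  "okp \<xi> n \<longleftrightarrow> (\<forall>i<n. i mod 12 \<noteq> 3 \<longrightarrow> \<xi> i = pat (i mod 12))"

lemma okp_Suc: "okp \<xi> (Suc n) \<longleftrightarrow> okp \<xi> n \<and> (n mod 12 \<noteq> 3 \<longrightarrow> \<xi> n = pat (n mod 12))"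
  unfolding okp_def by (auto simp: less_Suc_eq)

lemma range_genc: "(\<exists>\<eta>. \<xi> = genc \<eta>) \<longleftrightarrow> (\<forall>n. okp \<xi> n)"
proof
  assume "\<exists>\<eta>. \<xi> = genc \<eta>"
  thus "\<forall>n. okp \<xi> n" unfolding okp_def by (auto simp: genc_eq)
next
  assume H: "\<forall>n. okp \<xi> n"
  have "\<xi> = genc (\<lambda>b. \<xi> (12*b+3))"
  proof
    fix n
    show "\<xi> n = genc (\<lambda>b. \<xi> (12*b+3)) n"
    proof (cases "n mod 12 = 3")
      case True
      hence "12 * (n div 12) + 3 = n" using mult_div_mod_eq[of 12 n] by simp
      thus ?thesis using True by (simp add: genc_eq)
    next
      case False
      thus ?thesis using H[rule_format, of "Suc n"] by (simp add: genc_eq okp_def)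
    qed
  qed
  thus "\<exists>\<eta>. \<xi> = genc \<eta>" by blast
qed

lemma genc_inj: "genc \<eta> = \<xi> \<Longrightarrow> \<eta> = (\<lambda>b. \<xi> (12*b+3))"
proof
  fix b :: nat assume "genc \<eta> = \<xi>"
  moreover have "(12*b+3) mod 12 = 3" "(12*b+3) div 12 = b" by simp_all
  ultimately show "\<eta> b = \<xi> (12*b+3)" by (metis genc_eq)
qed

lemma nonext_iff: "nonext p \<longleftrightarrow> (\<exists>i<length p. i mod 12 \<noteq> 3 \<and> p!i \<noteq> pat (i mod 12))"
proof
  assume ne: "nonext p"
  show "\<exists>i<length p. i mod 12 \<noteq> 3 \<and> p!i \<noteq> pat (i mod 12)"
  proof (rule ccontr)
    assume "\<not> ?thesis"
    hence H: "\<forall>i<length p. i mod 12 \<noteq> 3 \<longrightarrow> p!i = pat (i mod 12)" by blast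
    define \<eta> where "\<eta> b = (if 12*b+3 < length p then p!(12*b+3) else False)" for b
    have "genc \<eta> [0 \<rightarrow> length p] = p"
    proof (rule nth_equalityI)
      show "length (genc \<eta> [0 \<rightarrow> length p]) = length p" by (simp add: subsequence_def)
      fix i assume "i < length (genc \<eta> [0 \<rightarrow> length p])"
      hence i: "i < length p" by (simp add: subsequence_def)
      show "genc \<eta> [0 \<rightarrow> length p] ! i = p ! i"
      proof (cases "i mod 12 = 3")
        case True
        hence "12 * (i div 12) + 3 = i" using mult_div_mod_eq[of 12 i] by simp
        thus ?thesis using True i by (simp add: subsequence_def genc_eq \<eta>_def)
      next
        case False thus ?thesis using H i by (simp add: subsequence_def genc_eq)
      qed
    qed
    thus False using ne unfolding nonext_def by blast
  qed
next
  assume "\<exists>i<length p. i mod 12 \<noteq> 3 \<and> p!i \<noteq> pat (i mod 12)"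
  then obtain i where i: "i < length p" "i mod 12 \<noteq> 3" "p!i \<noteq> pat (i mod 12)" by blast
  show "nonext p" unfolding nonext_def
  proof (intro allI notI)
    fix \<eta> assume "genc \<eta> [0 \<rightarrow> length p] = p"
    hence "genc \<eta> i = p ! i" using i(1) by (metis subsequence_def nth_map_upt add_0 length_map length_upt minus_nat.diff_0)
    thus False using i by (simp add: genc_eq)
  qed
qed

lemma run_d2: "run d2 0 \<xi> n = (if okp \<xi> n then n mod 12 else 12)"
proof (induction n)
  case 0 thus ?case by (simp add: okp_def)
next
  case (Suc n)
  show ?case
  proof (cases "okp \<xi> n")
    case False thus ?thesis using Suc by (simp add: okp_Suc d2_def)
  next
    case True
    have r: "n mod 12 < 12" by simp
    show ?thesis
    proof (cases "n mod 12 = 3")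
      case True3: True
      hence "Suc n mod 12 = 4" by (simp add: mod_Suc)
      thus ?thesis using Suc True True3 by (simp add: okp_Suc d2_def)
    next
      case False
      have "Suc n mod 12 = (if n mod 12 = 11 then 0 else Suc (n mod 12))" by (simp add: mod_Suc)
      thus ?thesis using Suc True False by (auto simp: okp_Suc d2_def)
    qed
  qed
qed

lemma length_genc_list: "length (genc_list u) = 12 * length u"
  by (induction u) (auto simp: genc_list_def)

lemma genc_list_nth: "i < length (genc_list u) \<Longrightarrow> i mod 12 \<noteq> 3 \<Longrightarrow> genc_list u ! i = pat (i mod 12)"
proof (induction u arbitrary: i)
  case Nil thus ?case by (simp add: genc_list_def)
next
  case (Cons x u)
  have gl: "genc_list (x # u) = (tl6 (bit x) @ tl6 2) @ genc_list u" by (simp add: genc_list_def)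
  show ?case
  proof (cases "i < 12")
    case True
    have "genc_list (x # u) ! i = (tl6 (bit x) @ tl6 2) ! i" unfolding gl using True by (subst nth_append) simp
    moreover have im: "i mod 12 = i" using True by simp
    ultimately show ?thesis using blk12[OF True] Cons.prems(2) by simp
  next
    case False
    have "(i - 12) mod 12 = i mod 12" using False by (simp add: le_mod_geq)
    moreover have "i - 12 < length (genc_list u)" using Cons.prems False by (simp add: length_genc_list)
    moreover have "genc_list (x # u) ! i = genc_list u ! (i - 12)" unfolding gl using False by (subst nth_append) simp
    ultimately show ?thesis using Cons.IH[of "i - 12"] Cons.prems by simp
  qed
qed


lemma stretchK:
  assumes k: "0 < (k::nat)" and eq: "\<And>n. N \<le> n \<Longrightarrow> x n = y ((n + a) div k - c)"
  shows "infs x = infs y"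
proof (rule infs_stretch[where g="\<lambda>n. (n + a) div k - c" and N=N and x=x and y=y, OF eq])
  show "(n + a) div k - c \<le> (Suc n + a) div k - c" for n by (simp add: diff_le_mono div_le_mono)
  show "(Suc n + a) div k - c \<le> Suc ((n + a) div k - c)" for n
  proof -
    have "(Suc n + a) div k \<le> (n + a + k) div k" by (intro div_le_mono) (use k in simp)
    also have "\<dots> = (n + a) div k + 1" using k div_add_self2[of k "n+a"] by simp
    finally show ?thesis by linarith
  qed
  show "\<exists>n. m \<le> (n + a) div k - c" for m
  proof -
    have "(k*(m+c) + a) div k = m + c + a div k" using k by simp
    thus ?thesis by (intro exI[of _ "k*(m+c)"]) simp
  qed
qed

definition tA :: "(nat \<Rightarrow> bool \<Rightarrow> nat) \<Rightarrow> nat \<Rightarrow> bool \<Rightarrow> nat \<Rightarrow> nat" where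
  "tA \<delta>A d a q = (if d = 3 then \<delta>A q a else q)"

definition tB :: "(nat \<Rightarrow> bool \<Rightarrow> nat) \<Rightarrow> nat \<Rightarrow> nat \<Rightarrow> bool \<Rightarrow> nat \<Rightarrow> nat" where
  "tB \<delta>B q0B c a q = (if p1 c = 12 then \<delta>B q a else if d2 (p1 c) a = 12 then q0B else q)"

lemma split12: obtains q r where "(n::nat) = 12*q + r" "r < 12" "n div 12 = q" "n mod 12 = r"
proof -
  have "n = 12*(n div 12) + n mod 12" by simp
  moreover have "n mod 12 < 12" by simp
  ultimately show ?thesis using that by blast
qed

lemma dm12: "(n::nat) = 12*q + r \<Longrightarrow> r < 12 \<Longrightarrow> n div 12 = q \<and> n mod 12 = r"
  by simp

lemma crunA_genc:
  assumes g: "\<forall>n. okp \<xi> n"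
  shows "crun d2 0 (tA \<delta>A) q0A \<xi> n = run \<delta>A q0A (\<lambda>b. \<xi> (12*b+3)) ((n + 8) div 12)"
proof (induction n)
  case 0 thus ?case by simp
next
  case (Suc n)
  have rn: "run d2 0 \<xi> n = n mod 12" using run_d2[of \<xi> n] g by simp
  obtain q r where n: "n = 12*q + r" "r < 12" "n div 12 = q" "n mod 12 = r" by (rule split12)
  show ?case
  proof (cases "r = 3")
    case True
    have e1: "n + 8 = 12*q + 11" "Suc n + 8 = 12*(q+1) + 0" using n True by simp_all
    have d: "(n + 8) div 12 = q" "(Suc n + 8) div 12 = Suc q" using dm12[OF e1(1)] dm12[OF e1(2)] by simp_all
    have xn: "\<xi> n = \<xi> (12*q+3)" using n True by simp
    have "crun d2 0 (tA \<delta>A) q0A \<xi> (Suc n) = \<delta>A (crun d2 0 (tA \<delta>A) q0A \<xi> n) (\<xi> n)"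
      using rn n(4) True by (simp add: tA_def)
    also have "\<dots> = \<delta>A (run \<delta>A q0A (\<lambda>b. \<xi> (12*b+3)) q) (\<xi> (12*q+3))" using Suc.IH d xn by simp
    also have "\<dots> = run \<delta>A q0A (\<lambda>b. \<xi> (12*b+3)) ((Suc n + 8) div 12)" using d by simp
    finally show ?thesis .
  next
    case False
    have "(Suc n + 8) div 12 = (n + 8) div 12"
    proof (cases "r < 3")
      case True
      have e1: "n + 8 = 12*q + (r+8)" "Suc n + 8 = 12*q + (r+9)" using n by simp_all
      show ?thesis using dm12[OF e1(1)] dm12[OF e1(2)] True by simp
    next
      case F: False
      have e1: "n + 8 = 12*(q+1) + (r-4)" "Suc n + 8 = 12*(q+1) + (r-3)" using n F False by simp_all
      show ?thesis using dm12[OF e1(1)] dm12[OF e1(2)] n by simp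
    qed
    thus ?thesis using Suc.IH rn n False by (simp add: tA_def)
  qed
qed

lemma dot_G: assumes g: "\<exists>\<eta>. \<xi> = genc \<eta>" shows "dot A B \<xi> = A (\<lambda>b. \<xi> (12*b+3))"
proof -
  obtain \<eta>0 where e0: "\<xi> = genc \<eta>0" using g by blast
  have th: "(THE \<eta>. \<xi> = genc \<eta>) = (\<lambda>b. \<xi> (12*b+3))"
  proof (rule the_equality)
    show "\<xi> = genc (\<lambda>b. \<xi> (12*b+3))" using e0 genc_inj[OF e0[symmetric]] by simp
    show "\<And>\<eta>. \<xi> = genc \<eta> \<Longrightarrow> \<eta> = (\<lambda>b. \<xi> (12*b+3))" using genc_inj by metis
  qed
  show ?thesis unfolding dot_def using g th by simp
qed

definition n0 :: "bool word \<Rightarrow> nat" where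
  "n0 \<xi> = (LEAST i. i mod 12 \<noteq> 3 \<and> \<xi> i \<noteq> pat (i mod 12))"

lemma n0_props:
  assumes ng: "\<not> (\<exists>\<eta>. \<xi> = genc \<eta>)"
  shows "n0 \<xi> mod 12 \<noteq> 3 \<and> \<xi> (n0 \<xi>) \<noteq> pat (n0 \<xi> mod 12)"
    and "\<And>i. i < n0 \<xi> \<Longrightarrow> i mod 12 \<noteq> 3 \<Longrightarrow> \<xi> i = pat (i mod 12)"
proof -
  have "\<exists>i. i mod 12 \<noteq> 3 \<and> \<xi> i \<noteq> pat (i mod 12)"
    using ng range_genc unfolding okp_def by blast
  thus "n0 \<xi> mod 12 \<noteq> 3 \<and> \<xi> (n0 \<xi>) \<noteq> pat (n0 \<xi> mod 12)" unfolding n0_def by (rule LeastI_ex)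
  show "\<And>i. i < n0 \<xi> \<Longrightarrow> i mod 12 \<noteq> 3 \<Longrightarrow> \<xi> i = pat (i mod 12)"
    unfolding n0_def using not_less_Least by blast
qed

lemma okp_n0: assumes ng: "\<not> (\<exists>\<eta>. \<xi> = genc \<eta>)" shows "okp \<xi> n \<longleftrightarrow> n \<le> n0 \<xi>"
proof
  assume "okp \<xi> n"
  thus "n \<le> n0 \<xi>" using n0_props(1)[OF ng] unfolding okp_def by (meson not_le)
next
  assume "n \<le> n0 \<xi>"
  thus "okp \<xi> n" using n0_props(2)[OF ng] unfolding okp_def by simp
qed

lemma dot_H: assumes ng: "\<not> (\<exists>\<eta>. \<xi> = genc \<eta>)" shows "dot A B \<xi> = B (suffix (Suc (n0 \<xi>)) \<xi>)"
proof -
  define n where "n = n0 \<xi>"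
  have P1: "n mod 12 \<noteq> 3" "\<xi> n \<noteq> pat (n mod 12)" using n0_props(1)[OF ng] unfolding n_def by auto
  have P2: "\<And>i. i < n \<Longrightarrow> i mod 12 \<noteq> 3 \<Longrightarrow> \<xi> i = pat (i mod 12)" using n0_props(2)[OF ng] unfolding n_def by auto
  have th: "(THE \<eta>. \<exists>u v. \<xi> = (genc_list u @ v) \<frown> \<eta> \<and> v \<noteq> [] \<and> nonext (genc_list u @ v) \<and>
                (\<forall>j. 0 < j \<and> j < length v \<longrightarrow> \<not> nonext (genc_list u @ take j v))) = suffix (Suc n) \<xi>"
  proof (rule the_equality)
    let ?v = "\<xi> [0 \<rightarrow> Suc n]"
    have lv: "length ?v = Suc n" by (simp add: subsequence_def)
    have vnth: "i < Suc n \<Longrightarrow> ?v ! i = \<xi> i" for i unfolding subsequence_def by (subst nth_map_upt) auto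
    have g0: "genc_list [] = []" by (simp add: genc_list_def)
    show "\<exists>u v. \<xi> = (genc_list u @ v) \<frown> suffix (Suc n) \<xi> \<and> v \<noteq> [] \<and> nonext (genc_list u @ v) \<and>
                (\<forall>j. 0 < j \<and> j < length v \<longrightarrow> \<not> nonext (genc_list u @ take j v))"
    proof -
      have e1: "\<xi> = (genc_list [] @ ?v) \<frown> suffix (Suc n) \<xi>" using prefix_suffix[of \<xi> "Suc n"] g0 by simp
      have e2: "?v \<noteq> []" using lv by auto
      have e3: "nonext (genc_list [] @ ?v)" unfolding nonext_iff g0 using P1 lv vnth[of n]
        by (intro exI[of _ n]) simp
      have e4: "\<forall>j. 0 < j \<and> j < length ?v \<longrightarrow> \<not> nonext (genc_list [] @ take j ?v)"
      proof (intro allI impI notI)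
        fix j assume j: "0 < j \<and> j < length ?v"
        assume "nonext (genc_list [] @ take j ?v)"
        hence "\<exists>i<length (take j ?v). i mod 12 \<noteq> 3 \<and> take j ?v ! i \<noteq> pat (i mod 12)"
          by (simp only: nonext_iff g0 append.left_neutral)
        then obtain i where i0: "i < length (take j ?v)" "i mod 12 \<noteq> 3" "take j ?v ! i \<noteq> pat (i mod 12)"
          by blast
        hence i: "i < j" "i mod 12 \<noteq> 3" "take j ?v ! i \<noteq> pat (i mod 12)" using j lv by auto
        have "take j ?v ! i = \<xi> i" using i j lv vnth by simp
        moreover have "i < n" using i j lv by simp
        ultimately show False using P2 i by simp
      qed
      show ?thesis using e1 e2 e3 e4 by blast
    qed
  next
    fix \<eta>' assume "\<exists>u v. \<xi> = (genc_list u @ v) \<frown> \<eta>' \<and> v \<noteq> [] \<and> nonext (genc_list u @ v) \<and>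
                (\<forall>j. 0 < j \<and> j < length v \<longrightarrow> \<not> nonext (genc_list u @ take j v))"
    then obtain u v where h1: "\<xi> = (genc_list u @ v) \<frown> \<eta>'" and h3: "nonext (genc_list u @ v)"
      and h4: "\<forall>j. 0 < j \<and> j < length v \<longrightarrow> \<not> nonext (genc_list u @ take j v)" by blast
    define p where "p = genc_list u @ v"
    define L where "L = length (genc_list u)"
    have xp: "\<xi> i = p ! i" if "i < length p" for i using h1 that unfolding p_def by simp
    from h3 obtain i where i: "i < length p" "i mod 12 \<noteq> 3" "p ! i \<noteq> pat (i mod 12)"
      unfolding nonext_iff p_def by blast
    have "n \<le> i" using P2[of i] i xp[OF i(1)] by (meson not_le)
    hence nlt: "n < length p" using i(1) by simp
    have nL: "L \<le> n"
    proof (rule ccontr)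
      assume "\<not> L \<le> n"
      hence nl: "n < L" by simp
      hence "genc_list u ! n = pat (n mod 12)" using genc_list_nth[of n u] P1 unfolding L_def by simp
      hence "p ! n = pat (n mod 12)" using nl unfolding p_def L_def by (simp add: nth_append)
      thus False using xp[OF nlt] P1 by simp
    qed
    have lp: "length p = Suc n"
    proof (rule ccontr)
      assume "length p \<noteq> Suc n"
      hence lt: "Suc n < length p" using nlt by simp
      define j where "j = Suc n - L"
      have j: "0 < j" "j < length v" using nL lt unfolding j_def p_def L_def by auto
      have tk: "genc_list u @ take j v = take (Suc n) p" unfolding p_def j_def using nL unfolding L_def by simp
      have "nonext (take (Suc n) p)" unfolding nonext_iff
        using lt P1 xp[OF nlt] by (intro exI[of _ n]) simp
      thus False using h4 j tk by metis
    qed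
    have "suffix (length p) \<xi> = \<eta>'" using h1 unfolding p_def by simp
    thus "\<eta>' = suffix (Suc n) \<xi>" using lp by simp
  qed
  show ?thesis unfolding dot_def using ng th unfolding n_def by simp
qed


section \<open>Muller automata for the dot operation\<close>

definition Phi2 :: "nat set set \<Rightarrow> nat set set \<Rightarrow> nat set \<Rightarrow> nat set \<Rightarrow> bool" where
  "Phi2 FA FB X Y \<longleftrightarrow> (if 12 \<in> p1 ` X then Y \<in> FB else p2 ` X \<in> FA)"

lemma tA_in: "aut QA q0A \<delta>A \<Longrightarrow> q \<in> QA \<Longrightarrow> tA \<delta>A d a q \<in> QA"
  unfolding aut_def tA_def by auto

lemma tB_in: "aut QB q0B \<delta>B \<Longrightarrow> q \<in> QB \<Longrightarrow> tB \<delta>B q0B c a q \<in> QB"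
  unfolding aut_def tB_def by auto

lemma autC1: "aut QA q0A \<delta>A \<Longrightarrow> aut (prod_encode ` ({0..<13} \<times> QA)) (prod_encode (0, q0A)) (cdelta d2 (tA \<delta>A))"
  by (rule cascade_aut[OF d2_aut]) (auto simp: aut_def tA_in)

lemma dot_pre:
  assumes mA: "muller_recognises QA q0A \<delta>A FA (A -` {j})" and mB: "muller_recognises QB q0B \<delta>B FB (B -` {j})"
  shows "dot A B \<xi> = j \<longleftrightarrow> Phi2 FA FB (infs (run (cdelta d2 (tA \<delta>A)) (prod_encode (0, q0A)) \<xi>))
            (infs (crun (cdelta d2 (tA \<delta>A)) (prod_encode (0, q0A)) (tB \<delta>B q0B) q0B \<xi>))"
proof -
  have aA: "aut QA q0A \<delta>A" and accA: "\<And>\<eta>. A \<eta> = j \<longleftrightarrow> infs (run \<delta>A q0A \<eta>) \<in> FA"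
    using muller_recognisesD[OF mA] by auto
  have accB: "\<And>\<eta>. B \<eta> = j \<longleftrightarrow> infs (run \<delta>B q0B \<eta>) \<in> FB"
    using muller_recognisesD[OF mB] by auto
  define C1 where "C1 = cdelta d2 (tA \<delta>A)"
  define c0 where "c0 = prod_encode (0::nat, q0A)"
  have rC1: "run C1 c0 \<xi> n = prod_encode (run d2 0 \<xi> n, crun d2 0 (tA \<delta>A) q0A \<xi> n)" for n
    unfolding C1_def c0_def by (rule run_cascade)
  have fr: "finite (range (run C1 c0 \<xi>))" using autC1[OF aA] unfolding C1_def c0_def by (rule run_finite_range)
  have X1: "p1 ` infs (run C1 c0 \<xi>) = infs (run d2 0 \<xi>)"
    using infs_image[OF fr, of p1] by (simp add: rC1)
  have X2: "p2 ` infs (run C1 c0 \<xi>) = infs (crun d2 0 (tA \<delta>A) q0A \<xi>)"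
    using infs_image[OF fr, of p2] by (simp add: rC1)
  have p1C: "p1 (run C1 c0 \<xi> n) = run d2 0 \<xi> n" for n by (simp add: rC1)
  have goal: "dot A B \<xi> = j \<longleftrightarrow> Phi2 FA FB (infs (run C1 c0 \<xi>)) (infs (crun C1 c0 (tB \<delta>B q0B) q0B \<xi>))"
  proof (cases "\<exists>\<eta>. \<xi> = genc \<eta>")
    case True
    have ok: "\<forall>n. okp \<xi> n" using True range_genc by blast
    have rd: "run d2 0 \<xi> n = n mod 12" for n using run_d2[of \<xi> n] ok by simp
    have n12: "12 \<notin> infs (run d2 0 \<xi>)"
    proof
      assume "12 \<in> infs (run d2 0 \<xi>)"
      then obtain n where "run d2 0 \<xi> n = 12" by (auto simp: infs_def dest: INFM_EX)
      thus False using rd[of n] by simp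
    qed
    have "infs (crun d2 0 (tA \<delta>A) q0A \<xi>) = infs (run \<delta>A q0A (\<lambda>b. \<xi> (12*b+3)))"
      by (rule stretchK[where k=12 and N=0 and a=8 and c=0]) (simp_all add: crunA_genc[OF ok])
    thus ?thesis using dot_G[OF True] accA X1 X2 n12 by (simp add: Phi2_def)
  next
    case False
    define n where "n = n0 \<xi>"
    have rd: "run d2 0 \<xi> m = (if m \<le> n then m mod 12 else 12)" for m
      using run_d2[of \<xi> m] okp_n0[OF False, of m] unfolding n_def by simp
    have y12: "12 \<in> infs (run d2 0 \<xi>)"
    proof -
      have "\<forall>m. \<exists>k\<ge>m. run d2 0 \<xi> k = 12"
      proof
        fix m show "\<exists>k\<ge>m. run d2 0 \<xi> k = 12" using rd[of "max m (Suc n)"] by (intro exI[of _ "max m (Suc n)"]) auto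
      qed
      thus ?thesis by (simp add: infs_def INFM_nat_le)
    qed
    have qb: "crun C1 c0 (tB \<delta>B q0B) q0B \<xi> (Suc n + k) = run \<delta>B q0B (suffix (Suc n) \<xi>) k" for k
    proof (induction k)
      case 0
      have a: "run d2 0 \<xi> n \<noteq> 12" using rd[of n] by simp
      have b: "d2 (run d2 0 \<xi> n) (\<xi> n) = 12" using rd[of "Suc n"] by simp
      show ?case using a b by (simp add: tB_def p1C)
    next
      case (Suc k)
      have r12: "run d2 0 \<xi> (Suc n + k) = 12" using rd[of "Suc n + k"] by (simp del: run_Suc)
      have "crun C1 c0 (tB \<delta>B q0B) q0B \<xi> (Suc n + Suc k) = tB \<delta>B q0B (run C1 c0 \<xi> (Suc n + k)) (\<xi> (Suc n + k))
              (crun C1 c0 (tB \<delta>B q0B) q0B \<xi> (Suc n + k))" by (simp del: run_Suc)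
      also have "\<dots> = \<delta>B (crun C1 c0 (tB \<delta>B q0B) q0B \<xi> (Suc n + k)) (\<xi> (Suc n + k))"
        using p1C[of "Suc n + k"] r12 by (simp add: tB_def del: run_Suc)
      also have "\<dots> = run \<delta>B q0B (suffix (Suc n) \<xi>) (Suc k)" using Suc.IH by (simp add: suffix_def)
      finally show ?case .
    qed
    have "infs (crun C1 c0 (tB \<delta>B q0B) q0B \<xi>) = infs (run \<delta>B q0B (suffix (Suc n) \<xi>))"
    proof (rule infs_stretch[where N="Suc n" and g="\<lambda>m. m - Suc n"])
      fix m assume "Suc n \<le> m"
      thus "crun C1 c0 (tB \<delta>B q0B) q0B \<xi> m = run \<delta>B q0B (suffix (Suc n) \<xi>) (m - Suc n)"
        using qb[of "m - Suc n"] by simp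
    next
      show "\<exists>m'. m \<le> m' - Suc n" for m by (intro exI[of _ "m + Suc n"]) simp
    qed auto
    thus ?thesis using dot_H[OF False] accB X1 y12 unfolding n_def by (simp add: Phi2_def)
  qed
  thus ?thesis unfolding C1_def c0_def .
qed

lemma dot_muller:
  assumes mA: "muller_recognises QA q0A \<delta>A FA (A -` {j})" and mB: "muller_recognises QB q0B \<delta>B FB (B -` {j})"
  shows "muller_recognises (prod_encode ` ((prod_encode ` ({0..<13} \<times> QA)) \<times> QB))
           (prod_encode (prod_encode (0, q0A), q0B)) (cdelta (cdelta d2 (tA \<delta>A)) (tB \<delta>B q0B))
           {S. Phi2 FA FB (p1 ` S) (p2 ` S)} (dot A B -` {j})"
proof -
  have aA: "aut QA q0A \<delta>A" using muller_recognisesD[OF mA] by blast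
  have aB: "aut QB q0B \<delta>B" using muller_recognisesD[OF mB] by blast
  have e: "dot A B -` {j} = {\<xi>. Phi2 FA FB (infs (run (cdelta d2 (tA \<delta>A)) (prod_encode (0, q0A)) \<xi>))
            (infs (crun (cdelta d2 (tA \<delta>A)) (prod_encode (0, q0A)) (tB \<delta>B q0B) q0B \<xi>))}"
    using dot_pre[OF mA mB] by auto
  have "muller_recognises (prod_encode ` ((prod_encode ` ({0..<13} \<times> QA)) \<times> QB))
           (prod_encode (prod_encode (0, q0A), q0B)) (cdelta (cdelta d2 (tA \<delta>A)) (tB \<delta>B q0B))
           {S. Phi2 FA FB (p1 ` S) (p2 ` S)}
           {\<xi>. Phi2 FA FB (infs (run (cdelta d2 (tA \<delta>A)) (prod_encode (0, q0A)) \<xi>))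
            (infs (crun (cdelta d2 (tA \<delta>A)) (prod_encode (0, q0A)) (tB \<delta>B q0B) q0B \<xi>))}"
    by (rule cascade_muller[OF autC1[OF aA]]) (use aB tB_in in \<open>auto simp: aut_def\<close>)
  thus ?thesis using e by simp
qed

lemma good_tA: "good QA \<delta>A (tA \<delta>A d a)"
proof (cases "d = 3")
  case True
  hence "tA \<delta>A d a = (\<lambda>q. \<delta>A q a)" by (simp add: tA_def fun_eq_iff)
  thus ?thesis by (simp add: good_letter)
next
  case False
  hence "tA \<delta>A d a = (\<lambda>q. q)" by (simp add: tA_def fun_eq_iff)
  thus ?thesis by (simp add: good_id)
qed

lemma good_tB: "q0B \<in> QB \<Longrightarrow> good QB \<delta>B (tB \<delta>B q0B c a)"
proof -
  assume q: "q0B \<in> QB"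
  consider "p1 c = 12" | "p1 c \<noteq> 12 \<and> d2 (p1 c) a = 12" | "p1 c \<noteq> 12 \<and> d2 (p1 c) a \<noteq> 12" by blast
  thus ?thesis
  proof cases
    case 1
    hence "tB \<delta>B q0B c a = (\<lambda>q. \<delta>B q a)" by (simp add: tB_def fun_eq_iff)
    thus ?thesis by (simp add: good_letter)
  next
    case 2
    hence "tB \<delta>B q0B c a = (\<lambda>q. q0B)" by (simp add: tB_def fun_eq_iff)
    thus ?thesis using q by (simp add: good_const)
  next
    case 3
    hence "tB \<delta>B q0B c a = (\<lambda>q. q)" by (simp add: tB_def fun_eq_iff)
    thus ?thesis by (simp add: good_id)
  qed
qed

lemma dot_aper:
  assumes aA: "aut QA q0A \<delta>A" and apA: "aperiodic_trans QA \<delta>A"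
    and aB: "aut QB q0B \<delta>B" and apB: "aperiodic_trans QB \<delta>B"
  shows "aperiodic_trans (prod_encode ` ((prod_encode ` ({0..<13} \<times> QA)) \<times> QB)) (cdelta (cdelta d2 (tA \<delta>A)) (tB \<delta>B q0B))"
proof -
  have ap1: "aperiodic_trans (prod_encode ` ({0..<13} \<times> QA)) (cdelta d2 (tA \<delta>A))"
    by (rule aperiodic_cascade[OF d2_aut _ _ good_tA d2_aper apA]) (use aA in \<open>auto simp: aut_def\<close>)
  show ?thesis
    by (rule aperiodic_cascade[OF autC1[OF aA] _ _ good_tB ap1 apB]) (use aB in \<open>auto simp: aut_def\<close>)
qed

lemma qop_range: "qop i A \<xi> = i \<or> (\<exists>\<eta>. qop i A \<xi> = A \<eta>)"
  unfolding qop_def by auto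

lemma dot_range: "(\<exists>\<eta>. dot A B \<xi> = A \<eta>) \<or> (\<exists>\<eta>. dot A B \<xi> = B \<eta>)"
  unfolding dot_def by auto

theorem lemma4p2:
  fixes k :: nat
  assumes "k \<ge> 2"
  shows "(\<forall>A\<in>Ak k. \<forall>i<k. qop i A \<in> Ak k) \<and> (\<forall>A\<in>Ak k. \<forall>B\<in>Ak k. dot A B \<in> Ak k) \<and>
         (\<forall>A\<in>Rk k. \<forall>i<k. qop i A \<in> Rk k) \<and> (\<forall>A\<in>Rk k. \<forall>B\<in>Rk k. dot A B \<in> Rk k)"
proof (intro conjI ballI allI impI)
  fix A i assume A: "A \<in> Ak k" and i: "i < k"
  have r: "qop i A \<xi> < k" for \<xi> using qop_range[of i A \<xi>] A i unfolding Ak_def by auto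
  have "aperiodic_omega (qop i A -` {j})" if j: "j < k" for j
  proof -
    obtain QL q0L \<delta>L FL where m: "muller_recognises QL q0L \<delta>L FL (A -` {j})" and ap: "aperiodic_trans QL \<delta>L"
      using A j unfolding Ak_def aperiodic_omega_def by blast
    have aL: "aut QL q0L \<delta>L" using muller_recognisesD[OF m] by blast
    show ?thesis unfolding aperiodic_omega_def
      using qop_muller[OF m, of i] qop_aper[OF aL ap] by blast
  qed
  thus "qop i A \<in> Ak k" using r unfolding Ak_def by blast
next
  fix A B assume A: "A \<in> Ak k" and B: "B \<in> Ak k"
  have r: "dot A B \<xi> < k" for \<xi> using dot_range[of A B \<xi>] A B unfolding Ak_def by auto
  have "aperiodic_omega (dot A B -` {j})" if j: "j < k" for j
  proof -
    obtain QA q0A \<delta>A FA where mA: "muller_recognises QA q0A \<delta>A FA (A -` {j})" and apA: "aperiodic_trans QA \<delta>A"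
      using A j unfolding Ak_def aperiodic_omega_def by blast
    obtain QB q0B \<delta>B FB where mB: "muller_recognises QB q0B \<delta>B FB (B -` {j})" and apB: "aperiodic_trans QB \<delta>B"
      using B j unfolding Ak_def aperiodic_omega_def by blast
    have aA: "aut QA q0A \<delta>A" using muller_recognisesD[OF mA] by blast
    have aB: "aut QB q0B \<delta>B" using muller_recognisesD[OF mB] by blast
    show ?thesis unfolding aperiodic_omega_def
      using dot_muller[OF mA mB] dot_aper[OF aA apA aB apB] by blast
  qed
  thus "dot A B \<in> Ak k" using r unfolding Ak_def by blast
next
  fix A i assume A: "A \<in> Rk k" and i: "i < k"
  have r: "qop i A \<xi> < k" for \<xi> using qop_range[of i A \<xi>] A i unfolding Rk_def by auto
  have "regular_omega (qop i A -` {j})" if j: "j < k" for j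
  proof -
    obtain QL q0L \<delta>L FL where m: "muller_recognises QL q0L \<delta>L FL (A -` {j})"
      using A j unfolding Rk_def regular_omega_def by blast
    show ?thesis unfolding regular_omega_def using qop_muller[OF m, of i] by blast
  qed
  thus "qop i A \<in> Rk k" using r unfolding Rk_def by blast
next
  fix A B assume A: "A \<in> Rk k" and B: "B \<in> Rk k"
  have r: "dot A B \<xi> < k" for \<xi> using dot_range[of A B \<xi>] A B unfolding Rk_def by auto
  have "regular_omega (dot A B -` {j})" if j: "j < k" for j
  proof -
    obtain QA q0A \<delta>A FA where mA: "muller_recognises QA q0A \<delta>A FA (A -` {j})"
      using A j unfolding Rk_def regular_omega_def by blast
    obtain QB q0B \<delta>B FB where mB: "muller_recognises QB q0B \<delta>B FB (B -` {j})"
      using B j unfolding Rk_def regular_omega_def by blast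
    show ?thesis unfolding regular_omega_def using dot_muller[OF mA mB] by blast
  qed
  thus "dot A B \<in> Rk k" using r unfolding Rk_def by blast
qed

end
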